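(* Let $n\in\mathbb N$. Then $B_n^{[n-1]}=\{w_I:I\subseteq[n]\}$, and the map $\alpha:\mathsf T_n\cup\{\varnothing\}\to B_n^{[n-1]}$, $I\mapsto w_{g(I)}$, where $g(I)=\{n-j+1:j\in[n]\setminus I\}$, is an isomorphism of posets, where $B_n^{[n-1]}$ carries the Bruhat order and $\mathsf T_n\cup\{\varnothing\}$ carries the tableau order extended by $A\sqsubseteq\varnothing$ for all $A$.
   Context: Tableau order: for nonempty $A,B\subseteq[n]$, $A\sqsubseteq B$ iff there is a two-column semistandard Young tableau with first column entry set $A$ and second column entry set $B$ (equivalently $\#A\ge\#B$ and $A(k)\le B(k)$ for $k\le\#B$, $A(k)$ the $k$-th smallest element); $\mathsf T_n=(2^{[n]}\setminus\{\varnothing\},\sqsubseteq)$. $B_n$ is the hyperoctahedral Coxeter group with simple reflections $s_0,\dots,s_{n-1}$ and relations $s_j^2=1$, $(s_0s_1)^4=1$, $(s_is_{i+1})^3=1$ for $i\in[n-2]$, $(s_js_k)^2=1$ for $|j-k|\ge2$; $\ell$ is its Coxeter length. $B_n^{[n-1]}=\{w\in B_n:\ell(w)<\ell(ws_i)\ \forall i\in[n-1]\}$, with the restriction of the Bruhat order ($u\le w$ iff some reduced word for $w$ contains a subword that is a reduced word for $u$). Define $w_1=s_0$, $w_{k+1}=s_kw_k$ for $k\in[n-1]$, and for $I=\{i_1<\dots<i_m\}\subseteq[n]$, $w_I=w_{i_1}\cdots w_{i_m}$ ($w_\varnothing=1$). *)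

theory Defs
  imports Main "HOL-Library.Sublist"
begin

text \<open>Words are lists of letters j < n, the letter j standing for s_j.
  weq n is the congruence on such words generated by the Coxeter relations.\<close>

inductive weq :: "nat \<Rightarrow> nat list \<Rightarrow> nat list \<Rightarrow> bool" for n :: nat where
  refl: "w \<in> lists {..<n} \<Longrightarrow> weq n w w"
| sym: "weq n u v \<Longrightarrow> weq n v u"
| trans: "weq n u v \<Longrightarrow> weq n v w \<Longrightarrow> weq n u w"
| ctx: "weq n u v \<Longrightarrow> a \<in> lists {..<n} \<Longrightarrow> b \<in> lists {..<n} \<Longrightarrow> weq n (a @ u @ b) (a @ v @ b)"
| sq: "j < n \<Longrightarrow> weq n [j, j] []"
| r01: "1 < n \<Longrightarrow> weq n (concat (replicate 4 [0, 1])) []"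
| r3: "1 \<le> i \<Longrightarrow> i + 1 < n \<Longrightarrow> weq n (concat (replicate 3 [i, i + 1])) []"
| comm: "j < n \<Longrightarrow> k < n \<Longrightarrow> j + 2 \<le> k \<or> k + 2 \<le> j \<Longrightarrow> weq n (concat (replicate 2 [j, k])) []"

definition elt :: "nat \<Rightarrow> nat list \<Rightarrow> nat list set" where
  "elt n w = {v. weq n w v}"

definition Bgrp :: "nat \<Rightarrow> nat list set set" where
  "Bgrp n = elt n ` lists {..<n}"

definition bmult :: "nat \<Rightarrow> nat list set \<Rightarrow> nat list set \<Rightarrow> nat list set" where
  "bmult n x y = {v. \<exists>a\<in>x. \<exists>b\<in>y. weq n (a @ b) v}"

definition blen :: "nat \<Rightarrow> nat list set \<Rightarrow> nat" where
  "blen n x = (LEAST k. \<exists>w\<in>x. length w = k)"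

definition reduced_word :: "nat \<Rightarrow> nat list set \<Rightarrow> nat list \<Rightarrow> bool" where
  "reduced_word n x w \<longleftrightarrow> w \<in> x \<and> length w = blen n x"

definition bruhat :: "nat \<Rightarrow> nat list set \<Rightarrow> nat list set \<Rightarrow> bool" where
  "bruhat n u w \<longleftrightarrow> (\<exists>a b. reduced_word n w a \<and> subseq b a \<and> reduced_word n u b)"

text \<open>B_n^{[n-1]}: minimal length coset representatives.\<close>
definition BnQ :: "nat \<Rightarrow> nat list set set" where
  "BnQ n = {w \<in> Bgrp n. \<forall>i\<in>{1..n-1}. blen n w < blen n (bmult n w (elt n [i]))}"

text \<open>wword (k+1) is a word for w_{k+1}: w_1 = s_0, w_{k+1} = s_k w_k.\<close>
fun wword :: "nat \<Rightarrow> nat list" where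
  "wword 0 = []"
| "wword (Suc k) = (if k = 0 then [0] else k # wword k)"

definition wI :: "nat \<Rightarrow> nat set \<Rightarrow> nat list set" where
  "wI n I = elt n (concat (map wword (sorted_list_of_set I)))"

definition kth :: "nat set \<Rightarrow> nat \<Rightarrow> nat" where
  "kth A k = sorted_list_of_set A ! (k - 1)"

definition tab_le :: "nat set \<Rightarrow> nat set \<Rightarrow> bool" where
  "tab_le A B \<longleftrightarrow> card B \<le> card A \<and> (\<forall>k\<in>{1..card B}. kth A k \<le> kth B k)"

definition ext_le :: "nat set \<Rightarrow> nat set \<Rightarrow> bool" where
  "ext_le A B \<longleftrightarrow> B = {} \<or> (A \<noteq> {} \<and> tab_le A B)"

definition gmap :: "nat \<Rightarrow> nat set \<Rightarrow> nat set" where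
  "gmap n I = {n - j + 1 | j. j \<in> {1..n} - I}"

definition alpha :: "nat \<Rightarrow> nat set \<Rightarrow> nat list set" where
  "alpha n I = wI n (gmap n I)"

end

theory Submission
  imports Defs
begin

definition idw :: "nat \<Rightarrow> int list" where "idw n = map int [1..<Suc n]"

fun swp :: "nat \<Rightarrow> int list \<Rightarrow> int list" where
  "swp 0 (a#b#xs) = b#a#xs"
| "swp (Suc k) (x#xs) = x # swp k xs"
| "swp _ xs = xs"

fun negh :: "int list \<Rightarrow> int list" where
  "negh [] = []" | "negh (x#xs) = - x # xs"

definition opw :: "nat \<Rightarrow> int list \<Rightarrow> int list" where
  "opw j X = (if j = 0 then negh X else swp (j - 1) X)"

definition Wn :: "nat \<Rightarrow> nat list \<Rightarrow> int list" where
  "Wn n u = foldl (\<lambda>X j. opw j X) (idw n) u"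

lemma weq_lists: "weq n u v \<Longrightarrow> u \<in> lists {..<n} \<and> v \<in> lists {..<n}"
  by (induction rule: weq.induct) auto

lemma length_swp[simp]: "length (swp k xs) = length xs"
  by (induction k xs rule: swp.induct) auto

lemma length_negh[simp]: "length (negh xs) = length xs"
  by (cases xs) auto

lemma swp_swp[simp]: "swp k (swp k xs) = xs"
  by (induction k xs rule: swp.induct) auto

lemma negh_negh[simp]: "negh (negh xs) = xs"
  by (cases xs) auto

lemma set_swp[simp]: "set (swp k xs) = set xs"
  by (induction k xs rule: swp.induct) auto

lemma distinct_swp[simp]: "distinct (swp k xs) = distinct xs"
  by (induction k xs rule: swp.induct) auto

lemma filter_swp: "length (filter P (swp k xs)) = length (filter P xs)"
  by (induction k xs rule: swp.induct) auto

lemma map_swp: "map f (swp k xs) = swp k (map f xs)"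
  by (induction k xs rule: swp.induct) auto

lemma nth_swp: "Suc k < length xs \<Longrightarrow> swp k xs ! p = (if p = k then xs ! Suc k else if p = Suc k then xs ! k else xs ! p)"
proof (induction k xs arbitrary: p rule: swp.induct)
  case (1 a b xs)
  then show ?case by (cases p; cases "p - 1") auto
next
  case (2 k x xs)
  then show ?case by (cases p) auto
qed auto

lemma nth_negh: "xs \<noteq> [] \<Longrightarrow> negh xs ! p = (if p = 0 then - (xs ! 0) else xs ! p)"
  by (cases xs) (auto simp: nth_Cons split: nat.splits)

lemma Wn_append: "Wn n (u @ v) = foldl (\<lambda>X j. opw j X) (Wn n u) v"
  by (simp add: Wn_def)

lemma Wn_snoc: "Wn n (u @ [j]) = opw j (Wn n u)"
  by (simp add: Wn_def)

definition sg :: "nat \<Rightarrow> int \<Rightarrow> int" where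
  "sg j v = (if j = 0 then (if v = 1 \<or> v = -1 then - v else v)
     else if v = int j then int j + 1 else if v = int j + 1 then int j
     else if v = - int j then - int j - 1 else if v = - int j - 1 then - int j else v)"

lemma sg_odd: "sg j (- v) = - sg j v"
  unfolding sg_def by auto

lemma sg_sg[simp]: "sg j (sg j v) = v"
  unfolding sg_def by auto

lemma negh_map: "(\<And>x. f (- x) = - f x) \<Longrightarrow> negh (map f xs) = map f (negh xs)"
  by (cases xs) auto

lemma opw_map_sg: "opw k (map (sg j) X) = map (sg j) (opw k X)"
  unfolding opw_def by (auto simp: map_swp negh_map sg_odd)

lemma foldl_map_sg: "foldl (\<lambda>X j. opw j X) (map (sg j) X) u = map (sg j) (foldl (\<lambda>X j. opw j X) X u)"
  by (induction u arbitrary: X) (auto simp: opw_map_sg)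

lemma length_idw[simp]: "length (idw n) = n"
  by (simp add: idw_def)

lemma nth_idw: "p < n \<Longrightarrow> idw n ! p = int p + 1"
  by (simp add: idw_def del: upt_Suc)

lemma opw_idw: "j < n \<Longrightarrow> opw j (idw n) = map (sg j) (idw n)"
proof (rule nth_equalityI)
  assume j: "j < n"
  show "length (opw j (idw n)) = length (map (sg j) (idw n))" by (simp add: opw_def)
  fix p assume "p < length (opw j (idw n))"
  then have p: "p < n" by (simp add: opw_def split: if_splits)
  show "opw j (idw n) ! p = map (sg j) (idw n) ! p"
  proof (cases "j = 0")
    case True
    have "idw n \<noteq> []" using j by (cases n) (auto simp: idw_def)
    then show ?thesis using p j True by (auto simp: opw_def nth_negh nth_idw sg_def)
  next
    case False
    then have "Suc (j - 1) < length (idw n)" using j by simp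
    from nth_swp[OF this, of p] False
    have e: "opw j (idw n) ! p = (if p = j - 1 then idw n ! j else if p = j then idw n ! (j - 1) else idw n ! p)"
      by (simp add: opw_def)
    consider "p = j - 1" | "p = j" | "p \<noteq> j - 1" "p \<noteq> j" by blast
    then show ?thesis
    proof cases
      case 1 then show ?thesis using e p j False by (simp add: nth_idw sg_def)
    next
      case 2 then show ?thesis using e p j False by (simp add: nth_idw sg_def)
    next
      case 3 then show ?thesis using e p j False by (simp add: nth_idw sg_def)
    qed
  qed
qed

lemma Wn_Cons: "j < n \<Longrightarrow> Wn n (j # u) = map (sg j) (Wn n u)"
proof -
  assume j: "j < n"
  have "Wn n (j # u) = foldl (\<lambda>X j. opw j X) (opw j (idw n)) u" by (simp add: Wn_def)
  also have "\<dots> = foldl (\<lambda>X j. opw j X) (map (sg j) (idw n)) u" using j by (simp only: opw_idw)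
  also have "\<dots> = map (sg j) (Wn n u)" by (simp only: foldl_map_sg Wn_def)
  finally show ?thesis .
qed

definition Sg :: "nat list \<Rightarrow> int \<Rightarrow> int" where
  "Sg a = foldr (\<lambda>j f. sg j \<circ> f) a id"

lemma Wn_prefix: "a \<in> lists {..<n} \<Longrightarrow> Wn n (a @ w) = map (Sg a) (Wn n w)"
  by (induction a) (auto simp: Sg_def Wn_Cons)

lemma swp_comm: "k + 2 \<le> m \<Longrightarrow> swp k (swp m X) = swp m (swp k X)"
proof (induction k arbitrary: m X)
  case 0
  then obtain m' where m: "m = Suc (Suc m')" by (cases m; cases "m - 1") auto
  show ?case unfolding m by (cases X rule: remdups_adj.cases) simp_all
next
  case (Suc k)
  then obtain m' where m: "m = Suc m'" by (cases m) auto
  have "k + 2 \<le> m'" using Suc.prems m by simp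
  then show ?case using Suc.IH unfolding m by (cases X) simp_all
qed

lemma negh_swp: "0 < k \<Longrightarrow> negh (swp k X) = swp k (negh X)"
  by (cases k; cases X) simp_all

lemma opw_comm1: assumes "j + 2 \<le> k" shows "opw j (opw k X) = opw k (opw j X)"
proof (cases "j = 0")
  case True
  then show ?thesis using assms by (simp add: opw_def negh_swp)
next
  case False
  then show ?thesis using assms swp_comm[of "j - 1" "k - 1" X] by (simp add: opw_def)
qed

lemma opw_comm: "j + 2 \<le> k \<or> k + 2 \<le> j \<Longrightarrow> opw j (opw k X) = opw k (opw j X)"
  using opw_comm1 by metis

lemma braid3_swp: "Suc (Suc k) < length X \<Longrightarrow> swp (Suc k) (swp k (swp (Suc k) (swp k (swp (Suc k) (swp k X))))) = X"
proof (induction k arbitrary: X)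
  case 0
  then obtain a b c r where "X = a # b # c # r"
    by (cases X rule: remdups_adj.cases; cases "tl (tl X)") auto
  then show ?case by simp
next
  case (Suc k)
  from Suc.prems obtain x xs where X: "X = x # xs" by (cases X) auto
  have "Suc (Suc k) < length xs" using Suc.prems X by simp
  from Suc.IH[OF this] show ?case by (simp add: X)
qed

lemma opw_0[simp]: "opw 0 X = negh X" by (simp add: opw_def)
lemma opw_Suc[simp]: "opw (Suc k) X = swp k X" by (simp add: opw_def)

lemma r01_gen: "foldl (\<lambda>X j. opw j X) (a # b # xs) (concat (replicate 4 [0, 1])) = a # b # xs"
  by (simp add: opw_def numeral_eq_Suc)

lemma r3_gen: "Suc (Suc k) < length X \<Longrightarrow> foldl (\<lambda>X j. opw j X) X [Suc k, Suc (Suc k), Suc k, Suc (Suc k), Suc k, Suc (Suc k)] = X"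
  using braid3_swp[of k X] by (simp only: foldl_Cons foldl_Nil opw_Suc)

lemma opw_opw[simp]: "opw j (opw j X) = X"
  by (simp add: opw_def)

lemma comm_gen: "j + 2 \<le> k \<or> k + 2 \<le> j \<Longrightarrow> foldl (\<lambda>X j. opw j X) X (concat (replicate 2 [j, k])) = X"
proof -
  assume a: "j + 2 \<le> k \<or> k + 2 \<le> j"
  have "concat (replicate 2 [j, k]) = [j, k, j, k]" by (simp add: numeral_2_eq_2)
  then show ?thesis using opw_comm[OF a, of "opw j X"] by simp
qed

lemma weq_Wn: "weq n u v \<Longrightarrow> Wn n u = Wn n v"
proof (induction rule: weq.induct)
  case (ctx u v a b)
  have "Wn n (a @ u @ b) = map (Sg a) (Wn n (u @ b))" using ctx by (simp add: Wn_prefix)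
  also have "\<dots> = map (Sg a) (Wn n (v @ b))" using ctx by (simp add: Wn_append)
  also have "\<dots> = Wn n (a @ v @ b)" using ctx by (simp add: Wn_prefix)
  finally show ?case .
next
  case (sq j)
  then show ?case by (simp add: Wn_def opw_def)
next
  case r01
  then obtain a b r where "idw n = a # b # r"
    by (cases "idw n" rule: remdups_adj.cases) (auto dest: arg_cong[of _ _ length])
  then show ?case unfolding Wn_def using r01_gen[of a b r] by simp
next
  case (r3 i)
  then obtain k where i: "i = Suc k" by (cases i) auto
  have c: "concat (replicate 3 [i, i + 1]) = [Suc k, Suc (Suc k), Suc k, Suc (Suc k), Suc k, Suc (Suc k)]"
    by (simp add: i numeral_3_eq_3)
  have "Suc (Suc k) < length (idw n)" using r3 i by simp
  then show ?case unfolding Wn_def c using r3_gen by simp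
next
  case (comm j k)
  have "foldl (\<lambda>X j. opw j X) (idw n) (concat (replicate 2 [j, k])) = idw n"
    by (rule comm_gen) (use comm in auto)
  then show ?case by (simp only: Wn_def foldl_Nil)
next
  case (refl w) then show ?case by simp
next
  case (sym u v) then show ?case by simp
next
  case (trans u v w) then show ?case by simp
qed

section \<open>Length statistic\<close>

fun ninv :: "int list \<Rightarrow> nat" where
  "ninv [] = 0"
| "ninv (x # xs) = length (filter (\<lambda>y. y < x) xs) + ninv xs"

definition Nn :: "int list \<Rightarrow> nat set" where
  "Nn X = {m. 0 < m \<and> - int m \<in> set X}"

definition Lw :: "int list \<Rightarrow> nat" where
  "Lw X = ninv X + \<Sum>(Nn X)"

definition valid :: "nat \<Rightarrow> int list \<Rightarrow> bool" where
  "valid n X \<longleftrightarrow> length X = n \<and> distinct (map abs X) \<and> set (map abs X) = {1..int n}"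

definition dsc :: "int list \<Rightarrow> nat \<Rightarrow> bool" where
  "dsc X j \<longleftrightarrow> (if j = 0 then X ! 0 < 0 else X ! j < X ! (j - 1))"

lemma valid_idw: "valid n (idw n)"
proof -
  have "map abs (idw n) = idw n" by (simp add: idw_def)
  moreover have "set (idw n) = {1..int n}"
    by (simp add: idw_def image_int_atLeastLessThan del: upt_Suc) auto
  ultimately show ?thesis by (simp add: valid_def idw_def distinct_map inj_on_def del: upt_Suc)
qed

lemma map_abs_negh: "map abs (negh X) = map abs X"
  by (cases X) auto

lemma valid_negh: "valid n X \<Longrightarrow> valid n (negh X)"
  unfolding valid_def by (metis map_abs_negh length_negh)

lemma valid_swp: "valid n X \<Longrightarrow> valid n (swp k X)"
  unfolding valid_def by (metis map_swp length_swp distinct_swp set_swp)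

lemma valid_opw: "valid n X \<Longrightarrow> valid n (opw j X)"
  unfolding opw_def by (auto simp: valid_negh valid_swp)

lemma valid_Wn: "valid n (Wn n u)"
  unfolding Wn_def by (induction u rule: rev_induct) (auto simp: valid_idw valid_opw)

lemma valid_distinct: "valid n X \<Longrightarrow> distinct X"
  unfolding valid_def by (simp add: distinct_map)

lemma valid_mem: "valid n X \<Longrightarrow> x \<in> set X \<Longrightarrow> 1 \<le> \<bar>x\<bar> \<and> \<bar>x\<bar> \<le> int n"
  unfolding valid_def by (metis atLeastAtMost_iff imageI list.set_map)

lemma valid_nonzero: "valid n X \<Longrightarrow> x \<in> set X \<Longrightarrow> x \<noteq> 0"
  using valid_mem by fastforce

lemma valid_neg: "valid n X \<Longrightarrow> x \<in> set X \<Longrightarrow> - x \<notin> set X"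
proof
  assume v: "valid n X" and x: "x \<in> set X" and mx: "- x \<in> set X"
  have "x \<noteq> - x" using valid_nonzero[OF v x] by simp
  moreover have "inj_on abs (set X)" using v unfolding valid_def by (simp add: distinct_map)
  ultimately show False using x mx inj_onD[of abs "set X" x "- x"] by simp
qed

lemma valid_some: "valid n X \<Longrightarrow> 1 \<le> a \<Longrightarrow> a \<le> int n \<Longrightarrow> a \<in> set X \<or> - a \<in> set X"
proof -
  assume v: "valid n X" "1 \<le> a" "a \<le> int n"
  then have "a \<in> abs ` set X" unfolding valid_def by (metis atLeastAtMost_iff list.set_map)
  then obtain x where "x \<in> set X" "a = \<bar>x\<bar>" by auto
  then show ?thesis by (cases "x \<ge> 0") auto
qed

lemma length_filter_card: "distinct xs \<Longrightarrow> length (filter P xs) = card {x \<in> set xs. P x}"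
  by (metis distinct_card distinct_filter set_filter)

lemma ninv_swp: "distinct X \<Longrightarrow> Suc k < length X \<Longrightarrow>
  ninv (swp k X) + (if X ! Suc k < X ! k then 1 else 0) = ninv X + (if X ! k < X ! Suc k then 1 else 0)"
proof (induction k X rule: swp.induct)
  case (1 a b xs)
  then show ?case by auto
next
  case (2 k x xs)
  then show ?case by (simp add: filter_swp)
qed auto

lemma ninv_map: "(\<And>x y. x \<in> set X \<Longrightarrow> y \<in> set X \<Longrightarrow> f y < f x \<longleftrightarrow> y < x) \<Longrightarrow> ninv (map f X) = ninv X"
proof (induction X)
  case (Cons x xs)
  have "filter ((\<lambda>z. z < f x) \<circ> f) xs = filter (\<lambda>y. y < x) xs"
    by (rule filter_cong) (use Cons.prems in auto)
  then have "filter (\<lambda>y. y < f x) (map f xs) = map f (filter (\<lambda>y. y < x) xs)"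
    by (simp add: filter_map)
  then show ?case using Cons by simp
qed simp

lemma ninv_sorted: "sorted_wrt (<) X \<Longrightarrow> ninv X = 0"
  by (induction X) (auto simp: filter_empty_conv)

lemma count_small:
  assumes v: "valid n (x # xs)"
  shows "length (filter (\<lambda>y. y < \<bar>x\<bar>) xs) = length (filter (\<lambda>y. y < - \<bar>x\<bar>) xs) + (nat \<bar>x\<bar> - 1)"
proof -
  have d: "distinct xs" using valid_distinct[OF v] by simp
  have ia: "inj_on abs (set (x # xs))" using v unfolding valid_def distinct_map by blast
  have xn: "x \<notin> set xs" using valid_distinct[OF v] by simp
  have f1: "abs ` set (x # xs) = {1..int n}" using v unfolding valid_def by simp
  have sx: "set xs = set (x # xs) - {x}" using xn by auto
  have f2: "abs ` set xs = abs ` set (x # xs) - abs ` {x}"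
    by (subst sx) (rule inj_on_image_set_diff[OF ia]; auto)
  have A: "abs ` set xs = {1..int n} - {\<bar>x\<bar>}"
    unfolding f2 f1 by simp
  have S: "{y \<in> set xs. y < \<bar>x\<bar>} = {y \<in> set xs. y < - \<bar>x\<bar>} \<union> {y \<in> set xs. \<bar>y\<bar> < \<bar>x\<bar>}"
  proof -
    have "y \<noteq> - \<bar>x\<bar>" if "y \<in> set xs" for y
      using that ia xn inj_onD[OF ia, of y x] by auto
    then show ?thesis by fastforce
  qed
  have "card {y \<in> set xs. \<bar>y\<bar> < \<bar>x\<bar>} = card (abs ` {y \<in> set xs. \<bar>y\<bar> < \<bar>x\<bar>})"
    using ia by (intro card_image[symmetric]) (auto simp: inj_on_def)
  also have "abs ` {y \<in> set xs. \<bar>y\<bar> < \<bar>x\<bar>} = {a \<in> abs ` set xs. a < \<bar>x\<bar>}" by auto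
  also have "\<dots> = {1..<\<bar>x\<bar>}"
    unfolding A using valid_mem[OF v, of x] by auto
  also have "card {1..<\<bar>x\<bar>} = nat \<bar>x\<bar> - 1" by simp
  finally have C: "card {y \<in> set xs. \<bar>y\<bar> < \<bar>x\<bar>} = nat \<bar>x\<bar> - 1" .
  have "card {y \<in> set xs. y < \<bar>x\<bar>} = card {y \<in> set xs. y < - \<bar>x\<bar>} + card {y \<in> set xs. \<bar>y\<bar> < \<bar>x\<bar>}"
    unfolding S by (rule card_Un_disjoint) auto
  then show ?thesis using C d by (simp add: length_filter_card)
qed

lemma finite_Nn[simp]: "finite (Nn X)"
proof -
  have "Nn X \<subseteq> (\<lambda>v. nat (- v)) ` set X" unfolding Nn_def by force
  then show ?thesis using finite_subset by blast
qed

lemma Nn_swp[simp]: "Nn (swp k X) = Nn X"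
  by (simp add: Nn_def)

lemma Lw_negh_neg:
  assumes v: "valid n (x # xs)" and x: "x < 0"
  shows "Lw (- x # xs) + 1 = Lw (x # xs)"
proof -
  define m where "m = nat (- x)"
  have xm: "x = - int m" and m0: "0 < m" using x by (auto simp: m_def)
  have xn: "x \<notin> set xs" using valid_distinct[OF v] by simp
  define N where "N = {m'. 0 < m' \<and> - int m' \<in> set xs}"
  have N1: "Nn (- x # xs) = N" unfolding Nn_def N_def using x by auto
  have N2: "Nn (x # xs) = insert m N" unfolding Nn_def N_def using xm m0 by auto
  have mN: "m \<notin> N" unfolding N_def using xn xm by auto
  have fN: "finite N" using N1 finite_Nn by metis
  have S: "\<Sum>(Nn (x # xs)) = m + \<Sum>N" unfolding N2 using mN fN by simp
  have "length (filter (\<lambda>y. y < \<bar>x\<bar>) xs) = length (filter (\<lambda>y. y < - \<bar>x\<bar>) xs) + (nat \<bar>x\<bar> - 1)"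
    by (rule count_small[OF v])
  then have "length (filter (\<lambda>y. y < - x) xs) = length (filter (\<lambda>y. y < x) xs) + (m - 1)"
    using x by (simp add: m_def)
  then show ?thesis unfolding Lw_def using S N1 m0 by simp
qed

lemma Lw_swp:
  assumes v: "valid n X" and k: "Suc k < n"
  shows "Lw (swp k X) + (if X ! Suc k < X ! k then 1 else 0) = Lw X + (if X ! k < X ! Suc k then 1 else 0)"
  using ninv_swp[OF valid_distinct[OF v], of k] v k unfolding Lw_def valid_def by simp

lemma Lw_opw_dsc:
  assumes v: "valid n X" and j: "j < n" and d: "dsc X j"
  shows "Lw (opw j X) + 1 = Lw X"
proof (cases j)
  case 0
  then obtain x xs where X: "X = x # xs" using j v by (cases X) (auto simp: valid_def)
  then show ?thesis using Lw_negh_neg[of n x xs] v d 0 by (simp add: dsc_def)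
next
  case (Suc k)
  then show ?thesis using Lw_swp[OF v, of k] j d by (auto simp: dsc_def)
qed

lemma Lw_opw_asc:
  assumes v: "valid n X" and j: "j < n" and d: "\<not> dsc X j"
  shows "Lw (opw j X) = Lw X + 1"
proof (cases j)
  case 0
  then obtain x xs where X: "X = x # xs" using j v by (cases X) (auto simp: valid_def)
  have "x \<noteq> 0" using valid_nonzero[OF v] X by simp
  then have "- x < 0" using d 0 X by (simp add: dsc_def)
  moreover have "valid n (- x # xs)" using valid_negh[OF v] X by simp
  ultimately show ?thesis using Lw_negh_neg[of n "- x" xs] 0 X by simp
next
  case (Suc k)
  have "X ! k \<noteq> X ! Suc k" using valid_distinct[OF v] j Suc v
    by (simp add: nth_eq_iff_index_eq valid_def)
  then show ?thesis using Lw_swp[OF v, of k] j d Suc by (auto simp: dsc_def)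
qed

lemma dsc_opw_flip:
  assumes v: "valid n X" and j: "j < n" and d: "\<not> dsc X j"
  shows "dsc (opw j X) j"
proof (cases j)
  case 0
  then obtain x xs where X: "X = x # xs" using j v by (cases X) (auto simp: valid_def)
  have "x \<noteq> 0" using valid_nonzero[OF v] X by simp
  then show ?thesis using d 0 X by (simp add: dsc_def)
next
  case (Suc k)
  have "X ! k \<noteq> X ! Suc k" using valid_distinct[OF v] j Suc v
    by (simp add: nth_eq_iff_index_eq valid_def)
  moreover have "Suc k < length X" using v j Suc by (simp add: valid_def)
  ultimately show ?thesis using d Suc by (auto simp: dsc_def nth_swp)
qed

lemma sorted_idw: "sorted_wrt (<) (idw n)" by (simp add: idw_def sorted_wrt_map del: upt_Suc)

lemma Nn_idw: "Nn (idw n) = {}" by (auto simp: Nn_def idw_def)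

lemma Lw_idw: "Lw (idw n) = 0"
  using sorted_idw Nn_idw by (simp add: Lw_def ninv_sorted)

lemma Lw_Wn_le: "u \<in> lists {..<n} \<Longrightarrow> Lw (Wn n u) \<le> length u"
proof (induction u rule: rev_induct)
  case Nil
  then show ?case by (simp add: Wn_def Lw_idw)
next
  case (snoc j u)
  then have j: "j < n" and u: "u \<in> lists {..<n}" by auto
  have "Lw (opw j (Wn n u)) \<le> Lw (Wn n u) + 1"
    using Lw_opw_dsc[OF valid_Wn j] Lw_opw_asc[OF valid_Wn j] by (cases "dsc (Wn n u) j") force+
  then show ?case using snoc.IH[OF u] by (simp add: Wn_snoc)
qed

lemma weq_refl': "w \<in> lists {..<n} \<Longrightarrow> weq n w w"
  by (rule weq.refl)

lemma weq_app: "weq n u v \<Longrightarrow> w \<in> lists {..<n} \<Longrightarrow> weq n (u @ w) (v @ w)"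
  using weq.ctx[of n u v "[]" w] by simp

lemma weq_pre: "weq n u v \<Longrightarrow> w \<in> lists {..<n} \<Longrightarrow> weq n (w @ u) (w @ v)"
  using weq.ctx[of n u v w "[]"] by simp

lemma weq_cancel: "x \<in> lists {..<n} \<Longrightarrow> y \<in> lists {..<n} \<Longrightarrow> j < n \<Longrightarrow> weq n (x @ j # j # y) (x @ y)"
  using weq.ctx[OF weq.sq[of j n], of x y] by simp

lemma weq_comm2:
  assumes "j < n" "k < n" "j + 2 \<le> k \<or> k + 2 \<le> j"
  shows "weq n [k, j] [j, k]"
proof -
  have R: "weq n [j, k, j, k] []" using weq.comm[OF assms] by (simp add: numeral_2_eq_2)
  have "weq n ([k, j] @ [j, k, j, k]) ([k, j] @ [])" using weq_pre[OF R, of "[k, j]"] assms by simp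
  then have 1: "weq n [k, j] [k, j, j, k, j, k]" by (simp add: weq.sym)
  have 2: "weq n [k, j, j, k, j, k] [k, k, j, k]" using weq_cancel[of "[k]" n "[k, j, k]" j] assms by simp
  have 3: "weq n [k, k, j, k] [j, k]" using weq_cancel[of "[]" n "[j, k]" k] assms by simp
  show ?thesis using 1 2 3 weq.trans by blast
qed

lemma weq_braid3:
  assumes "1 \<le> i" "i + 1 < n"
  shows "weq n [i, i + 1, i] [i + 1, i, i + 1]"
proof -
  let ?a = i and ?b = "i + 1"
  have a: "?a < n" and b: "?b < n" using assms by auto
  have R: "weq n [?a, ?b, ?a, ?b, ?a, ?b] []" using weq.r3[OF assms] by (simp add: numeral_3_eq_3)
  have "weq n ([?a, ?b, ?a] @ [?a, ?b, ?a, ?b, ?a, ?b]) ([?a, ?b, ?a] @ [])" using weq_pre[OF R, of "[?a, ?b, ?a]"] a b by simp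
  then have 1: "weq n [?a, ?b, ?a] [?a, ?b, ?a, ?a, ?b, ?a, ?b, ?a, ?b]" by (simp add: weq.sym)
  have 2: "weq n [?a, ?b, ?a, ?a, ?b, ?a, ?b, ?a, ?b] [?a, ?b, ?b, ?a, ?b, ?a, ?b]"
    using weq_cancel[of "[?a, ?b]" n "[?b, ?a, ?b, ?a, ?b]" ?a] a b by simp
  have 3: "weq n [?a, ?b, ?b, ?a, ?b, ?a, ?b] [?a, ?a, ?b, ?a, ?b]"
    using weq_cancel[of "[?a]" n "[?a, ?b, ?a, ?b]" ?b] a b by simp
  have 4: "weq n [?a, ?a, ?b, ?a, ?b] [?b, ?a, ?b]"
    using weq_cancel[of "[]" n "[?b, ?a, ?b]" ?a] a b by simp
  show ?thesis using 1 2 3 4 weq.trans by blast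
qed

lemma weq_braid4:
  assumes "1 < n"
  shows "weq n [1, 0, 1, 0] [0, 1, 0, 1]"
proof -
  have a: "(0::nat) < n" and b: "(1::nat) < n" using assms by auto
  have R: "weq n [0, 1, 0, 1, 0, 1, 0, 1] []" using weq.r01[OF assms] by (simp add: numeral_eq_Suc)
  have "weq n ([1, 0, 1, 0] @ [0, 1, 0, 1, 0, 1, 0, 1]) ([1, 0, 1, 0] @ [])" using weq_pre[OF R, of "[1, 0, 1, 0]"] a b by simp
  then have 1: "weq n [1, 0, 1, 0] [1, 0, 1, 0, 0, 1, 0, 1, 0, 1, 0, 1]" by (simp add: weq.sym)
  have 2: "weq n [1, 0, 1, 0, 0, 1, 0, 1, 0, 1, 0, 1] [1, 0, 1, 1, 0, 1, 0, 1, 0, 1]"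
    using weq_cancel[of "[1, 0, 1]" n "[1, 0, 1, 0, 1, 0, 1]" 0] a b by simp
  have 3: "weq n [1, 0, 1, 1, 0, 1, 0, 1, 0, 1] [1, 0, 0, 1, 0, 1, 0, 1]"
    using weq_cancel[of "[1, 0]" n "[0, 1, 0, 1, 0, 1]" 1] a b by simp
  have 4: "weq n [1, 0, 0, 1, 0, 1, 0, 1] [1, 1, 0, 1, 0, 1]"
    using weq_cancel[of "[1]" n "[1, 0, 1, 0, 1]" 0] a b by simp
  have 5: "weq n [1, 1, 0, 1, 0, 1] [0, 1, 0, 1]"
    using weq_cancel[of "[]" n "[0, 1, 0, 1]" 1] a b by simp
  show ?thesis using 1 2 3 4 5 weq.trans by blast
qed

section \<open>Canonical words and faithfulness\<close>

fun Cf :: "nat \<Rightarrow> nat \<Rightarrow> int list \<Rightarrow> nat list" where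
  "Cf n 0 X = []"
| "Cf n (Suc k) X = (if \<exists>j<n. dsc X j
     then Cf n k (opw (LEAST j. j < n \<and> dsc X j) X) @ [LEAST j. j < n \<and> dsc X j] else [])"

definition Cw :: "nat \<Rightarrow> int list \<Rightarrow> nat list" where
  "Cw n X = Cf n (Lw X) X"

lemma Cf_lists: "Cf n k X \<in> lists {..<n}"
proof (induction k arbitrary: X)
  case (Suc k)
  show ?case
  proof (cases "\<exists>j<n. dsc X j")
    case True
    then have "(LEAST j. j < n \<and> dsc X j) < n" by (metis (mono_tags, lifting) LeastI)
    then show ?thesis using Suc True by simp
  next
    case False then show ?thesis by (simp only: Cf.simps if_not_P[OF False]) simp
  qed
qed simp

lemma Cw_lists: "Cw n X \<in> lists {..<n}"
  by (simp add: Cw_def Cf_lists)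

lemma Cw_unfold:
  assumes v: "valid n X" and d: "d < n" "dsc X d" and mn: "\<And>j. j < d \<Longrightarrow> \<not> dsc X j"
  shows "Cw n X = Cw n (opw d X) @ [d]"
proof -
  have L: "(LEAST j. j < n \<and> dsc X j) = d"
    by (rule Least_equality) (use d mn in \<open>auto simp: not_less[symmetric]\<close>)
  have "Lw X = Suc (Lw (opw d X))" using Lw_opw_dsc[OF v d] by simp
  then show ?thesis unfolding Cw_def using d L by auto
qed

lemma nodsc_sorted:
  assumes v: "valid n X" and nd: "\<And>j. 1 \<le> j \<Longrightarrow> j < n \<Longrightarrow> \<not> dsc X j"
  shows "sorted_wrt (<) X"
proof -
  have "X ! i < X ! Suc i" if "Suc i < length X" for i
  proof -
    have "\<not> X ! Suc i < X ! i" using nd[of "Suc i"] that v by (simp add: dsc_def valid_def)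
    moreover have "X ! i \<noteq> X ! Suc i" using valid_distinct[OF v] that
      by (simp add: nth_eq_iff_index_eq)
    ultimately show ?thesis by simp
  qed
  then show ?thesis by (simp add: sorted_wrt_iff_nth_Suc_transp)
qed

lemma sorted_nodsc:
  assumes "sorted_wrt (<) X" "1 \<le> j" "j < length X"
  shows "\<not> dsc X j"
  using sorted_wrt_nth_less[OF assms(1), of "j - 1" j] assms by (simp add: dsc_def)

lemma nodsc_Lw0:
  assumes v: "valid n X" and nd: "\<And>j. j < n \<Longrightarrow> \<not> dsc X j"
  shows "Lw X = 0"
proof -
  have s: "sorted_wrt (<) X" using nodsc_sorted[OF v] nd by blast
  have "Nn X = {}"
  proof (cases X)
    case (Cons x xs)
    have "0 < n" using v Cons by (simp add: valid_def)
    then have "\<not> x < 0" using nd[of 0] Cons by (simp add: dsc_def)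
    moreover have "x \<noteq> 0" using valid_nonzero[OF v] Cons by simp
    ultimately have "0 < x" by simp
    moreover have "\<forall>y\<in>set xs. x < y" using s Cons by simp
    ultimately show ?thesis using Cons by (auto simp: Nn_def)
  qed (simp add: Nn_def)
  then show ?thesis using s by (simp add: Lw_def ninv_sorted)
qed

lemma length_Cw: "valid n X \<Longrightarrow> length (Cw n X) = Lw X"
proof (induction "Lw X" arbitrary: X rule: less_induct)
  case less
  show ?case
  proof (cases "\<exists>j<n. dsc X j")
    case True
    define d where "d = (LEAST j. j < n \<and> dsc X j)"
    have d: "d < n" "dsc X d" using True LeastI_ex[of "\<lambda>j. j < n \<and> dsc X j"] by (auto simp: d_def)
    have mn: "\<not> dsc X j" if "j < d" for j
      using not_less_Least[of j "\<lambda>j. j < n \<and> dsc X j"] that d by (auto simp: d_def)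
    have L: "Lw (opw d X) + 1 = Lw X" using Lw_opw_dsc[OF less.prems d] .
    have "length (Cw n (opw d X)) = Lw (opw d X)"
      using less.hyps[of "opw d X"] L valid_opw[OF less.prems] by simp
    then show ?thesis using Cw_unfold[OF less.prems d mn] L by simp
  next
    case False
    then have "Lw X = 0" using nodsc_Lw0[OF less.prems] by blast
    then show ?thesis by (simp add: Cw_def)
  qed
qed

lemma swp_braid: "Suc (Suc k) < length X \<Longrightarrow> swp k (swp (Suc k) (swp k X)) = swp (Suc k) (swp k (swp (Suc k) X))"
proof (induction k arbitrary: X)
  case 0
  then obtain a b c r where "X = a # b # c # r"
    by (cases X rule: remdups_adj.cases; cases "tl (tl X)") auto
  then show ?case by simp
next
  case (Suc k)
  from Suc.prems obtain x xs where X: "X = x # xs" by (cases X) auto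
  have "Suc (Suc k) < length xs" using Suc.prems X by simp
  from Suc.IH[OF this] show ?case by (simp only: X swp.simps)
qed

lemma dsc_opw_far:
  assumes v: "valid n X" and d: "d < n" and j: "j < n" and far: "d + 2 \<le> j \<or> j + 2 \<le> d"
  shows "dsc (opw d X) j = dsc X j"
proof (cases d)
  case 0
  have "X \<noteq> []" using v d by (auto simp: valid_def)
  then show ?thesis using 0 far by (auto simp: dsc_def nth_negh)
next
  case (Suc k)
  have l: "Suc k < length X" using v d Suc by (simp add: valid_def)
  show ?thesis
  proof (cases j)
    case 0
    then show ?thesis using Suc far nth_swp[OF l] by (simp add: dsc_def)
  next
    case (Suc m)
    then show ?thesis using \<open>d = Suc k\<close> far nth_swp[OF l] by (auto simp: dsc_def)
  qed
qed

lemma weq_chain: "weq n A (B @ w) \<Longrightarrow> weq n B C \<Longrightarrow> w \<in> lists {..<n} \<Longrightarrow> weq n A (C @ w)"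
  using weq_app weq.trans by blast

lemma crux:
  "valid n X \<Longrightarrow> j < n \<Longrightarrow> dsc X j \<Longrightarrow> weq n (Cw n X) (Cw n (opw j X) @ [j])"
proof (induction "Lw X" arbitrary: X j rule: less_induct)
  case less
  note v = less.prems(1) and j = less.prems(2) and dj = less.prems(3)
  have IH: "weq n (Cw n Y) (Cw n (opw i Y) @ [i])"
    if "Lw Y < Lw X" "valid n Y" "i < n" "dsc Y i" for Y i
    using less.hyps that by blast
  define d where "d = (LEAST j. j < n \<and> dsc X j)"
  have d: "d < n" "dsc X d" using j dj LeastI[of "\<lambda>j. j < n \<and> dsc X j" j] by (auto simp: d_def)
  have mn: "\<not> dsc X i" if "i < d" for i
    using not_less_Least[of i "\<lambda>j. j < n \<and> dsc X j"] that d by (auto simp: d_def)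
  have dj': "d \<le> j" using Least_le[of "\<lambda>j. j < n \<and> dsc X j" j] j dj by (simp add: d_def)
  have CX: "Cw n X = Cw n (opw d X) @ [d]" using Cw_unfold[OF v d mn] .
  have LY: "Lw (opw d X) + 1 = Lw X" using Lw_opw_dsc[OF v d] .
  have LZ: "Lw (opw j X) + 1 = Lw X" using Lw_opw_dsc[OF v j dj] .
  show ?case
  proof (cases "j = d")
    case True
    then show ?thesis using CX d by (simp add: weq_refl' Cw_lists)
  next
    case False
    then have dlj: "d < j" using dj' by simp
    consider (far) "d + 2 \<le> j" | (b3) k where "d = Suc k" "j = Suc (Suc k)" | (b4) "d = 0" "j = 1"
    proof (cases "d + 2 \<le> j")
      case True
      then show ?thesis using that(1) by blast
    next
      case False
      then have jd: "j = Suc d" using dlj by simp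
      show ?thesis
      proof (cases d)
        case 0 then show ?thesis using that(3) jd by simp
      next
        case (Suc k) then show ?thesis using that(2) jd by simp
      qed
    qed
    then show ?thesis
    proof cases
      case far
      define Y where "Y = opw d X"
      define Z where "Z = opw j X"
      define V where "V = opw j Y"
      have ZV: "opw d Z = V" unfolding Z_def V_def Y_def using opw_comm far by metis
      have vY: "valid n Y" and vZ: "valid n Z" using valid_opw[OF v] by (auto simp: Y_def Z_def)
      have dY: "dsc Y j" unfolding Y_def using dsc_opw_far[OF v d(1) j] far dj by simp
      have dZ: "dsc Z d" unfolding Z_def using dsc_opw_far[OF v j d(1)] far d by simp
      have h2: "weq n (Cw n Y) (Cw n V @ [j])" using IH[OF _ vY j dY] LY by (simp add: Y_def V_def)
      have h3: "weq n (Cw n Z) (Cw n V @ [d])" using IH[OF _ vZ d(1) dZ] LZ ZV by (simp add: Z_def)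
      have "weq n (Cw n X) (Cw n V @ [j, d])"
        using weq_chain[of n "Cw n X" "Cw n Y" "[d]" "Cw n V @ [j]"] CX h2 d
        by (simp add: Y_def weq_refl' Cw_lists)
      moreover have "weq n (Cw n V @ [j, d]) (Cw n V @ [d, j])"
        using weq_pre[OF weq_comm2[OF d(1) j], of "Cw n V"] far by (simp add: Cw_lists)
      moreover have "weq n (Cw n V @ [d, j]) (Cw n Z @ [j])"
        using weq_app[OF h3, of "[j]"] j by (simp add: weq.sym)
      ultimately show ?thesis using weq.trans unfolding Z_def by blast
    next
      case b3
      have l: "Suc (Suc k) < length X" using v j b3 by (simp add: valid_def)
      have ab: "X ! Suc k < X ! k" using d b3 by (simp add: dsc_def)
      have bc: "X ! Suc (Suc k) < X ! Suc k" using dj b3 by (simp add: dsc_def)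
      define Y where "Y = swp k X"
      define Y2 where "Y2 = swp (Suc k) Y"
      define V where "V = swp k Y2"
      define Z where "Z = swp (Suc k) X"
      define Z2 where "Z2 = swp k Z"
      have VZ: "swp (Suc k) Z2 = V" unfolding V_def Y2_def Y_def Z2_def Z_def using swp_braid[OF l] by simp
      have lY: "Suc (Suc k) < length Y" "Suc (Suc k) < length Z" using l by (simp_all add: Y_def Z_def)
      have lY2: "Suc (Suc k) < length Y2" "Suc (Suc k) < length Z2" using l by (simp_all add: Y2_def Y_def Z_def Z2_def)
      have vY: "valid n Y" "valid n Y2" "valid n Z" "valid n Z2"
        unfolding Y2_def Y_def Z_def Z2_def using v by (simp_all add: valid_swp)
      have dY: "dsc Y (Suc (Suc k))" using ab bc l nth_swp[of k X] by (simp add: dsc_def Y_def)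
      have dY2: "dsc Y2 (Suc k)" using ab bc l nth_swp[of k X] nth_swp[of "Suc k" Y] lY
        by (simp add: dsc_def Y2_def Y_def)
      have dZ: "dsc Z (Suc k)" using ab bc l nth_swp[of "Suc k" X] by (simp add: dsc_def Z_def)
      have dZ2: "dsc Z2 (Suc (Suc k))" using ab bc l nth_swp[of "Suc k" X] nth_swp[of k Z] lY
        by (simp add: dsc_def Z2_def Z_def)
      have L1: "Lw Y + 1 = Lw X" using LY b3 by (simp add: Y_def)
      have L2: "Lw Y2 + 1 = Lw Y" using Lw_opw_dsc[OF vY(1) _ dY] j b3 by (simp add: Y2_def)
      have L3: "Lw Z + 1 = Lw X" using LZ b3 by (simp add: Z_def)
      have L4: "Lw Z2 + 1 = Lw Z" using Lw_opw_dsc[OF vY(3) _ dZ] d b3 by (simp add: Z2_def)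
      have h1: "weq n (Cw n Y) (Cw n Y2 @ [Suc (Suc k)])"
        using IH[OF _ vY(1) _ dY] L1 j b3 by (simp add: Y2_def)
      have h2: "weq n (Cw n Y2) (Cw n V @ [Suc k])"
        using IH[OF _ vY(2) _ dY2] L1 L2 d b3 by (simp add: V_def)
      have h3: "weq n (Cw n Z) (Cw n Z2 @ [Suc k])"
        using IH[OF _ vY(3) _ dZ] L3 d b3 by (simp add: Z2_def)
      have h4: "weq n (Cw n Z2) (Cw n V @ [Suc (Suc k)])"
        using IH[OF _ vY(4) _ dZ2] L3 L4 j b3 VZ by simp
      have CX': "Cw n X = Cw n Y @ [Suc k]" using CX b3 by (simp add: Y_def)
      have e1: "weq n (Cw n X) (Cw n Y2 @ [Suc (Suc k), Suc k])"
        using weq_app[OF h1, of "[Suc k]"] CX' d b3 by simp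
      have e2: "weq n (Cw n X) (Cw n V @ [Suc k, Suc (Suc k), Suc k])"
        using weq_chain[OF e1 h2] d j b3 by simp
      have a3: "weq n (Cw n Z @ [Suc (Suc k)]) (Cw n Z2 @ [Suc k, Suc (Suc k)])"
        using weq_app[OF h3, of "[Suc (Suc k)]"] j b3 by simp
      have e3: "weq n (Cw n Z @ [Suc (Suc k)]) (Cw n V @ [Suc (Suc k), Suc k, Suc (Suc k)])"
        using weq_chain[OF a3 h4] d j b3 by simp
      have e4: "weq n (Cw n V @ [Suc k, Suc (Suc k), Suc k]) (Cw n V @ [Suc (Suc k), Suc k, Suc (Suc k)])"
        using weq_pre[OF weq_braid3[of "Suc k" n], of "Cw n V"] j b3 by (simp add: Cw_lists)
      show ?thesis using e2 e4 e3 weq.trans weq.sym b3 unfolding Z_def by (metis opw_Suc)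
    next
      case b4
      have n1: "1 < n" using j b4 by simp
      obtain x y r where X: "X = x # y # r" using v n1
        by (cases X rule: remdups_adj.cases) (auto simp: valid_def)
      have x0: "x < 0" using d b4 X by (simp add: dsc_def)
      have yx: "y < x" using dj b4 X by (simp add: dsc_def)
      have vv: "valid n (- x # y # r)" "valid n (y # - x # r)" "valid n (- y # - x # r)"
        "valid n (y # x # r)" "valid n (- y # x # r)" "valid n (x # - y # r)"
        using v X valid_opw[of n _ 0] valid_opw[of n _ 1] by (metis negh.simps(2) opw_0 opw_Suc swp.simps(1) One_nat_def)+
      have L0: "Lw (- x # y # r) + 1 = Lw X" using LY b4 X by simp
      have L1: "Lw (y # - x # r) + 1 = Lw (- x # y # r)"
        using Lw_opw_dsc[OF vv(1), of 1] n1 x0 yx by (simp add: dsc_def)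
      have L2: "Lw (- y # - x # r) + 1 = Lw (y # - x # r)"
        using Lw_opw_dsc[OF vv(2), of 0] n1 x0 yx by (simp add: dsc_def)
      have L3: "Lw (y # x # r) + 1 = Lw X" using LZ b4 X by simp
      have L4: "Lw (- y # x # r) + 1 = Lw (y # x # r)"
        using Lw_opw_dsc[OF vv(4), of 0] n1 x0 yx by (simp add: dsc_def)
      have L5: "Lw (x # - y # r) + 1 = Lw (- y # x # r)"
        using Lw_opw_dsc[OF vv(5), of 1] n1 x0 yx by (simp add: dsc_def)
      have h1: "weq n (Cw n (- x # y # r)) (Cw n (y # - x # r) @ [1])"
        using IH[OF _ vv(1), of 1] L0 n1 x0 yx by (simp add: dsc_def)
      have h2: "weq n (Cw n (y # - x # r)) (Cw n (- y # - x # r) @ [0])"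
        using IH[OF _ vv(2), of 0] L0 L1 n1 x0 yx by (simp add: dsc_def)
      have h3: "weq n (Cw n (- y # - x # r)) (Cw n (- x # - y # r) @ [1])"
        using IH[OF _ vv(3), of 1] L0 L1 L2 n1 x0 yx by (simp add: dsc_def)
      have g1: "weq n (Cw n (y # x # r)) (Cw n (- y # x # r) @ [0])"
        using IH[OF _ vv(4), of 0] L3 n1 x0 yx by (simp add: dsc_def)
      have g2: "weq n (Cw n (- y # x # r)) (Cw n (x # - y # r) @ [1])"
        using IH[OF _ vv(5), of 1] L3 L4 n1 x0 yx by (simp add: dsc_def)
      have g3: "weq n (Cw n (x # - y # r)) (Cw n (- x # - y # r) @ [0])"
        using IH[OF _ vv(6), of 0] L3 L4 L5 n1 x0 yx by (simp add: dsc_def)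
      have CX': "Cw n X = Cw n (- x # y # r) @ [0]" using CX b4 X by simp
      have a1: "weq n (Cw n X) (Cw n (y # - x # r) @ [1, 0])"
        using weq_app[OF h1, of "[0]"] CX' n1 by simp
      have a2: "weq n (Cw n X) (Cw n (- y # - x # r) @ [0, 1, 0])"
        using weq_chain[OF a1 h2] n1 by simp
      have e1: "weq n (Cw n X) (Cw n (- x # - y # r) @ [1, 0, 1, 0])"
        using weq_chain[OF a2 h3] n1 by simp
      have b1: "weq n (Cw n (y # x # r) @ [1]) (Cw n (- y # x # r) @ [0, 1])"
        using weq_app[OF g1, of "[1]"] n1 by simp
      have b2: "weq n (Cw n (y # x # r) @ [1]) (Cw n (x # - y # r) @ [1, 0, 1])"
        using weq_chain[OF b1 g2] n1 by simp
      have e2: "weq n (Cw n (y # x # r) @ [1]) (Cw n (- x # - y # r) @ [0, 1, 0, 1])"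
        using weq_chain[OF b2 g3] n1 by simp
      have e3: "weq n (Cw n (- x # - y # r) @ [1, 0, 1, 0]) (Cw n (- x # - y # r) @ [0, 1, 0, 1])"
        using weq_pre[OF weq_braid4[OF n1]] by (simp add: Cw_lists)
      have "opw j X = y # x # r" using b4 X by simp
      then show ?thesis using e1 e2 e3 weq.trans weq.sym b4 by metis
    qed
  qed
qed

lemma Cw_idw: "Cw n (idw n) = []"
  by (simp add: Cw_def Lw_idw)

lemma weq_Cw: "u \<in> lists {..<n} \<Longrightarrow> weq n u (Cw n (Wn n u))"
proof (induction u rule: rev_induct)
  case Nil
  then show ?case by (simp add: Wn_def Cw_idw weq_refl')
next
  case (snoc j u)
  then have j: "j < n" and u: "u \<in> lists {..<n}" by auto
  define X where "X = Wn n u"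
  have v: "valid n X" by (simp add: X_def valid_Wn)
  have a: "weq n (u @ [j]) (Cw n X @ [j])" using weq_app[OF snoc.IH[OF u], of "[j]"] j by (simp add: X_def)
  have W: "Wn n (u @ [j]) = opw j X" by (simp add: X_def Wn_snoc)
  show ?case
  proof (cases "dsc X j")
    case True
    have "weq n (Cw n X @ [j]) (Cw n (opw j X) @ [j, j])"
      using weq_app[OF crux[OF v j True], of "[j]"] j by simp
    moreover have "weq n (Cw n (opw j X) @ [j, j]) (Cw n (opw j X))"
      using weq_cancel[of "Cw n (opw j X)" n "[]" j] j by (simp add: Cw_lists)
    ultimately show ?thesis using a W weq.trans by metis
  next
    case False
    have "weq n (Cw n (opw j X)) (Cw n X @ [j])"
      using crux[OF valid_opw[OF v] j dsc_opw_flip[OF v j False]] by simp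
    then show ?thesis using a W weq.trans weq.sym by metis
  qed
qed

theorem faithful: "weq n u v \<longleftrightarrow> u \<in> lists {..<n} \<and> v \<in> lists {..<n} \<and> Wn n u = Wn n v"
proof
  assume "weq n u v" then show "u \<in> lists {..<n} \<and> v \<in> lists {..<n} \<and> Wn n u = Wn n v"
    using weq_lists weq_Wn by blast
next
  assume a: "u \<in> lists {..<n} \<and> v \<in> lists {..<n} \<and> Wn n u = Wn n v"
  then show "weq n u v" using weq_Cw[of u n] weq_Cw[of v n] weq.sym weq.trans by metis
qed

lemma mem_elt: "v \<in> elt n u \<longleftrightarrow> weq n u v"
  by (simp add: elt_def)

lemma elt_eq: "weq n u v \<Longrightarrow> elt n u = elt n v"
  unfolding elt_def using weq.sym weq.trans by blast

lemma blen_elt: "u \<in> lists {..<n} \<Longrightarrow> blen n (elt n u) = Lw (Wn n u)"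
  unfolding blen_def
proof (rule Least_equality)
  assume u: "u \<in> lists {..<n}"
  have "Cw n (Wn n u) \<in> elt n u" using weq_Cw[OF u] by (simp add: mem_elt)
  moreover have "length (Cw n (Wn n u)) = Lw (Wn n u)" by (simp add: length_Cw valid_Wn)
  ultimately show "\<exists>w\<in>elt n u. length w = Lw (Wn n u)" by blast
next
  fix k assume "\<exists>w\<in>elt n u. length w = k"
  then obtain w where w: "weq n u w" "length w = k" by (auto simp: mem_elt)
  then have "w \<in> lists {..<n}" "Wn n u = Wn n w" using faithful by auto
  then show "Lw (Wn n u) \<le> k" using Lw_Wn_le w by metis
qed

lemma bmult_elt: "u \<in> lists {..<n} \<Longrightarrow> v \<in> lists {..<n} \<Longrightarrow> bmult n (elt n u) (elt n v) = elt n (u @ v)"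
proof -
  assume u: "u \<in> lists {..<n}" and v: "v \<in> lists {..<n}"
  show ?thesis
  proof (rule set_eqI)
    fix x
    show "x \<in> bmult n (elt n u) (elt n v) \<longleftrightarrow> x \<in> elt n (u @ v)"
    proof
      assume "x \<in> bmult n (elt n u) (elt n v)"
      then obtain a b where ab: "weq n u a" "weq n v b" "weq n (a @ b) x"
        by (auto simp: bmult_def mem_elt)
      have "weq n (u @ v) (a @ v)" using weq_app[OF ab(1)] v by simp
      moreover have "weq n (a @ v) (a @ b)" using weq_pre[OF ab(2)] weq_lists[OF ab(1)] by simp
      ultimately show "x \<in> elt n (u @ v)" using ab(3) weq.trans by (metis mem_elt)
    next
      assume "x \<in> elt n (u @ v)"
      then have x: "weq n (u @ v) x" by (simp add: mem_elt)
      have "u \<in> elt n u" "v \<in> elt n v" using u v by (simp_all add: mem_elt weq_refl')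
      then show "x \<in> bmult n (elt n u) (elt n v)"
        unfolding bmult_def mem_Collect_eq using x by blast
    qed
  qed
qed

section \<open>The elements w_I\<close>

definition wordJ :: "nat set \<Rightarrow> nat list" where
  "wordJ J = concat (map wword (sorted_list_of_set J))"

lemma wI_wordJ: "wI n J = elt n (wordJ J)"
  by (simp add: wI_def wordJ_def)

lemma wword_set: "set (wword k) \<subseteq> {..<k}"
  by (induction k) auto

lemma length_wword[simp]: "length (wword k) = k"
  by (induction k) auto

lemma wword_lists: "k \<le> n \<Longrightarrow> wword k \<in> lists {..<n}"
  using wword_set[of k] by auto

definition rho :: "nat \<Rightarrow> int \<Rightarrow> int" where
  "rho k v = (if v = 1 then - int k else if v = -1 then int k
     else if 2 \<le> v \<and> v \<le> int k then v - 1 else if - int k \<le> v \<and> v \<le> -2 then v + 1 else v)"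

lemma Sg_wword: "1 \<le> k \<Longrightarrow> Sg (wword k) = rho k"
proof (induction k)
  case 0 then show ?case by simp
next
  case (Suc k)
  show ?case
  proof (cases "k = 0")
    case True
    then show ?thesis by (auto simp: Sg_def rho_def sg_def fun_eq_iff)
  next
    case False
    then have IH: "Sg (wword k) = rho k" using Suc by simp
    have "Sg (wword (Suc k)) = sg k \<circ> Sg (wword k)" using False by (simp add: Sg_def)
    then show ?thesis using IH False by (auto simp: rho_def sg_def fun_eq_iff)
  qed
qed

lemma Wn_wword: "1 \<le> k \<Longrightarrow> k \<le> n \<Longrightarrow> Wn n (wword k @ w) = map (rho k) (Wn n w)"
  using Wn_prefix[OF wword_lists, of k n w] Sg_wword by simp

lemma valid_set_char:
  assumes v: "valid n X"
  shows "x \<in> set X \<longleftrightarrow> (x < 0 \<and> nat (- x) \<in> Nn X) \<or> (0 < x \<and> x \<le> int n \<and> nat x \<notin> Nn X)"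
proof -
  have "x \<in> set X \<longleftrightarrow> (x < 0 \<and> x \<in> set X) \<or> (0 < x \<and> x \<in> set X)"
    using valid_nonzero[OF v] by force
  moreover have "(x < 0 \<and> x \<in> set X) \<longleftrightarrow> (x < 0 \<and> nat (- x) \<in> Nn X)"
    by (auto simp: Nn_def)
  moreover have "(0 < x \<and> x \<in> set X) \<longleftrightarrow> (0 < x \<and> x \<le> int n \<and> nat x \<notin> Nn X)"
  proof -
    have "0 < x \<Longrightarrow> x \<in> set X \<Longrightarrow> x \<le> int n" using valid_mem[OF v] by fastforce
    moreover have "0 < x \<Longrightarrow> x \<in> set X \<Longrightarrow> nat x \<notin> Nn X" using valid_neg[OF v] by (auto simp: Nn_def)
    moreover have "0 < x \<Longrightarrow> x \<le> int n \<Longrightarrow> nat x \<notin> Nn X \<Longrightarrow> x \<in> set X"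
      using valid_some[OF v, of x] by (auto simp: Nn_def)
    ultimately show ?thesis by blast
  qed
  ultimately show ?thesis by blast
qed

lemma Nn_sub: "valid n X \<Longrightarrow> Nn X \<subseteq> {1..n}"
  using valid_mem unfolding Nn_def by fastforce

lemma valid_unique:
  assumes "valid n X" "valid n Y" "sorted_wrt (<) X" "sorted_wrt (<) Y" "Nn X = Nn Y"
  shows "X = Y"
proof -
  have "set X = set Y" using valid_set_char[OF assms(1)] valid_set_char[OF assms(2)] assms(5) by blast
  then show ?thesis using strict_sorted_equal[OF assms(4,3)] by simp
qed

lemma Wn_words:
  assumes "sorted_wrt (<) L" "set L \<subseteq> {1..n}"
  shows "sorted_wrt (<) (Wn n (concat (map wword L))) \<and> Nn (Wn n (concat (map wword L))) = set L"
  using assms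
proof (induction L)
  case Nil
  then show ?case by (simp add: Wn_def sorted_idw Nn_idw)
next
  case (Cons k L)
  define W where "W = Wn n (concat (map wword L))"
  have IH: "sorted_wrt (<) W" "Nn W = set L" using Cons by (auto simp: W_def)
  have k: "1 \<le> k" "k \<le> n" using Cons.prems by auto
  have gt: "\<forall>m\<in>set L. k < m" using Cons.prems by simp
  have v: "valid n W" by (simp add: W_def valid_Wn)
  have E: "Wn n (concat (map wword (k # L))) = map (rho k) W"
    using Wn_wword[OF k] by (simp add: W_def)
  have D: "x < - int k \<or> 0 < x" if "x \<in> set W" for x
  proof (rule ccontr)
    assume "\<not> (x < - int k \<or> 0 < x)"
    then have "x \<le> 0" "- int k \<le> x" by auto
    moreover have "x \<noteq> 0" using valid_nonzero[OF v that] .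
    ultimately have "nat (- x) \<in> Nn W" "nat (- x) \<le> k" using that by (auto simp: Nn_def)
    then show False using gt IH(2) by auto
  qed
  have mono: "rho k x < rho k y" if "x \<in> set W" "y \<in> set W" "x < y" for x y
    using D[OF that(1)] D[OF that(2)] that(3) k by (auto simp: rho_def)
  have S: "sorted_wrt (<) (map (rho k) W)"
    using IH(1) mono by (auto simp: sorted_wrt_map elim!: sorted_wrt_mono_rel[rotated])
  have one: "1 \<in> set W"
  proof -
    have "1 \<in> set W \<or> - 1 \<in> set W" using valid_some[OF v, of 1] k by simp
    moreover have "- 1 \<notin> set W"
    proof
      assume "- 1 \<in> set W" then have "(1::nat) \<in> Nn W" by (simp add: Nn_def)
      then show False using gt IH(2) k by auto
    qed
    ultimately show ?thesis by blast
  qed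
  have N: "Nn (map (rho k) W) = insert k (set L)"
  proof (rule set_eqI)
    fix m
    show "m \<in> Nn (map (rho k) W) \<longleftrightarrow> m \<in> insert k (set L)"
    proof
      assume "m \<in> Nn (map (rho k) W)"
      then obtain x where x: "x \<in> set W" "rho k x = - int m" "0 < m" by (auto simp: Nn_def)
      show "m \<in> insert k (set L)"
      proof (cases "x < - int k")
        case True
        then have "x = - int m" using x k by (auto simp: rho_def)
        then show ?thesis using x IH(2) by (auto simp: Nn_def)
      next
        case False
        then have "0 < x" using D[OF x(1)] by simp
        then show ?thesis using x k by (auto simp: rho_def split: if_splits)
      qed
    next
      assume "m \<in> insert k (set L)"
      then show "m \<in> Nn (map (rho k) W)"
      proof
        assume "m = k"
        then show ?thesis using one k by (force simp: Nn_def rho_def)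
      next
        assume m: "m \<in> set L"
        then have "- int m \<in> set W" "k < m" using IH(2) gt by (auto simp: Nn_def)
        moreover have "rho k (- int m) = - int m" using \<open>k < m\<close> k by (auto simp: rho_def)
        ultimately show ?thesis using \<open>k < m\<close> by (force simp: Nn_def)
      qed
    qed
  qed
  show ?case using E S N by simp
qed

lemma Wn_wordJ:
  assumes "J \<subseteq> {1..n}"
  shows "sorted_wrt (<) (Wn n (wordJ J)) \<and> Nn (Wn n (wordJ J)) = J"
proof -
  have f: "finite J" using assms finite_subset by blast
  show ?thesis unfolding wordJ_def
    using Wn_words[of "sorted_list_of_set J" n] f assms by simp
qed

lemma concat_map_lists: "\<forall>x\<in>set xs. f x \<in> lists A \<Longrightarrow> concat (map f xs) \<in> lists A"
  by (induction xs) auto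

lemma wordJ_lists: "J \<subseteq> {1..n} \<Longrightarrow> wordJ J \<in> lists {..<n}"
proof -
  assume J: "J \<subseteq> {1..n}"
  then have f: "finite J" using finite_subset by blast
  have "\<forall>k\<in>set (sorted_list_of_set J). wword k \<in> lists {..<n}"
  proof
    fix k assume "k \<in> set (sorted_list_of_set J)"
    then have "k \<le> n" using J f by auto
    then show "wword k \<in> lists {..<n}" by (rule wword_lists)
  qed
  then show ?thesis unfolding wordJ_def using concat_map_lists by blast
qed

section \<open>Left multiplication and the negative set\<close>

lemma Nn_map_sg: "Nn (map (sg j) X) = {m. 0 < m \<and> sg j (- int m) \<in> set X}"
proof -
  have "- int m \<in> sg j ` set X \<longleftrightarrow> sg j (- int m) \<in> set X" for m
    by (metis image_eqI imageE sg_sg)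
  then show ?thesis by (auto simp: Nn_def)
qed

lemma Nn_sg0:
  assumes v: "valid n X" and n: "0 < n"
  shows "Nn (map (sg 0) X) = {m. (m = 1 \<and> 1 \<notin> Nn X) \<or> (m \<noteq> 1 \<and> m \<in> Nn X)}"
proof -
  have one: "(1::int) \<in> set X \<longleftrightarrow> 1 \<notin> Nn X"
    using valid_some[OF v, of 1] valid_neg[OF v, of 1] n by (auto simp: Nn_def)
  show ?thesis unfolding Nn_map_sg
  proof (rule set_eqI)
    fix m
    show "m \<in> {m. 0 < m \<and> sg 0 (- int m) \<in> set X} \<longleftrightarrow> m \<in> {m. (m = 1 \<and> 1 \<notin> Nn X) \<or> (m \<noteq> 1 \<and> m \<in> Nn X)}"
    proof (cases "m = 1")
      case True
      have "sg 0 (- 1) = 1" by (simp add: sg_def)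
      then show ?thesis using True one by simp
    next
      case False
      show ?thesis
      proof (cases "m = 0")
        case True then show ?thesis by (simp add: Nn_def)
      next
        case m0: False
        have "sg 0 (- int m) = - int m" using False m0 by (auto simp: sg_def)
        then show ?thesis using False m0 by (simp add: Nn_def)
      qed
    qed
  qed
qed

definition tau :: "nat \<Rightarrow> nat \<Rightarrow> nat" where
  "tau i m = (if m = i then Suc i else if m = Suc i then i else m)"

lemma Nn_sgi:
  assumes "1 \<le> i"
  shows "Nn (map (sg i) X) = tau i ` Nn X"
proof -
  have e: "sg i (- int m) = - int (tau i m)" for m
    using assms by (auto simp: sg_def tau_def)
  have tt: "tau i (tau i m) = m" for m by (auto simp: tau_def)
  have p: "0 < tau i m \<longleftrightarrow> 0 < m" for m using assms by (auto simp: tau_def)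
  show ?thesis unfolding Nn_map_sg e
    by (auto simp: Nn_def p image_iff) (metis tt p)+
qed

lemma Lw_sg_desc0:
  assumes v: "valid n X" and one: "1 \<in> Nn X"
  shows "Lw (map (sg 0) X) + 1 = Lw X"
proof -
  have n: "0 < n" using Nn_sub[OF v] one by auto
  have m1: "-1 \<in> set X" using one by (simp add: Nn_def)
  have p1: "1 \<notin> set X" using valid_neg[OF v m1] by simp
  have mono: "sg 0 y < sg 0 x \<longleftrightarrow> y < x" if "x \<in> set X" "y \<in> set X" for x y
  proof -
    have "x \<noteq> 0" "y \<noteq> 0" "x \<noteq> 1" "y \<noteq> 1" using valid_nonzero[OF v] that p1 by auto
    then show ?thesis by (auto simp: sg_def)
  qed
  have I: "ninv (map (sg 0) X) = ninv X" by (rule ninv_map) (use mono in blast)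
  have N: "Nn (map (sg 0) X) = Nn X - {1}" using Nn_sg0[OF v n] one by auto
  have "\<Sum>(Nn X - {1}) + 1 = \<Sum>(Nn X)" using sum.remove[OF finite_Nn one, of id] by simp
  then show ?thesis using I N by (simp add: Lw_def)
qed

lemma Lw_sg_desci:
  assumes v: "valid n X" and i: "1 \<le> i" and a: "Suc i \<in> Nn X" and b: "i \<notin> Nn X"
  shows "Lw (map (sg i) X) + 1 = Lw X"
proof -
  have "Suc i \<le> n" using Nn_sub[OF v] a by auto
  have m1: "- int (Suc i) \<in> set X" using a by (simp add: Nn_def)
  have p1: "int (Suc i) \<notin> set X" using valid_neg[OF v m1] by (simp add: add.commute)
  have mi: "- int i \<notin> set X" using b i by (simp add: Nn_def)
  have mono: "sg i y < sg i x \<longleftrightarrow> y < x" if "x \<in> set X" "y \<in> set X" for x y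
  proof -
    have "x \<noteq> int (Suc i)" "y \<noteq> int (Suc i)" "x \<noteq> - int i" "y \<noteq> - int i"
      using that p1 mi by auto
    then show ?thesis using i by (auto simp: sg_def)
  qed
  have I: "ninv (map (sg i) X) = ninv X" by (rule ninv_map) (use mono in blast)
  have N: "Nn (map (sg i) X) = insert i (Nn X - {Suc i})"
    unfolding Nn_sgi[OF i] using a b by (auto simp: tau_def image_iff)
  have f: "finite (Nn X)" by simp
  have "\<Sum>(insert i (Nn X - {Suc i})) + 1 = i + \<Sum>(Nn X - {Suc i}) + 1"
    using b f by simp
  also have "\<dots> = \<Sum>(Nn X)" using sum.remove[OF f a, of id] by simp
  finally show ?thesis using I N by (simp add: Lw_def)
qed

section \<open>Counting and monotonicity along subwords\<close>

definition fc :: "nat \<Rightarrow> nat set \<Rightarrow> nat" where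
  "fc t S = card (S \<inter> {t..})"

definition tog :: "nat set \<Rightarrow> nat set" where
  "tog S = {m. (m = 1 \<and> 1 \<notin> S) \<or> (m \<noteq> 1 \<and> m \<in> S)}"

lemma fc_split: "finite S \<Longrightarrow> fc t S = fc (Suc t) S + (if t \<in> S then 1 else 0)"
proof -
  assume f: "finite S"
  have e: "S \<inter> {t..} = (S \<inter> {Suc t..}) \<union> (S \<inter> {t})" by auto
  have "card (S \<inter> {t..}) = card (S \<inter> {Suc t..}) + card (S \<inter> {t})"
    unfolding e by (rule card_Un_disjoint) (use f in auto)
  then show ?thesis by (auto simp: fc_def)
qed

lemma fc_cong: "S \<inter> {t..} = T \<inter> {t..} \<Longrightarrow> fc t S = fc t T"
  by (simp add: fc_def)

lemma finite_tog: "finite S \<Longrightarrow> finite (tog S)"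
proof -
  assume "finite S"
  moreover have "tog S \<subseteq> insert 1 S" by (auto simp: tog_def)
  ultimately show ?thesis using finite_subset by blast
qed

lemma fc_low: "finite S \<Longrightarrow> 0 \<notin> S \<Longrightarrow> t \<le> 1 \<Longrightarrow> fc t S = fc 2 S + (if 1 \<in> S then 1 else 0)"
proof -
  assume f: "finite S" "0 \<notin> S" "t \<le> 1"
  have "fc 1 S = fc 2 S + (if 1 \<in> S then 1 else 0)" using fc_split[OF f(1), of 1] by (simp add: numeral_2_eq_2)
  moreover have "fc 0 S = fc 1 S" using fc_split[OF f(1), of 0] f(2) by simp
  ultimately show ?thesis using f(3) by (cases t) auto
qed

lemma step_tog:
  assumes fS: "finite S" and fT: "finite T" and z: "0 \<notin> S" "0 \<notin> T"
    and le: "\<forall>t. fc t S \<le> fc t T" and asc: "1 \<notin> T"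
  shows "(\<forall>t. fc t (tog S) \<le> fc t (tog T)) \<and> (\<forall>t. fc t T \<le> fc t (tog T))"
proof -
  have hi: "fc t (tog X) = fc t X" if "2 \<le> t" for t X
    by (rule fc_cong) (use that in \<open>auto simp: tog_def\<close>)
  have z': "0 \<notin> tog S" "0 \<notin> tog T" using z by (auto simp: tog_def)
  have ft: "finite (tog S)" "finite (tog T)" using fS fT by (simp_all add: finite_tog)
  have T1: "1 \<in> tog T" using asc by (simp add: tog_def)
  have A: "fc t (tog S) \<le> fc t (tog T)" for t
  proof (cases "2 \<le> t")
    case True then show ?thesis using hi le by simp
  next
    case False
    then have t: "t \<le> 1" by simp
    have "fc t (tog S) \<le> fc 2 S + 1" using fc_low[OF ft(1) z'(1) t] hi[of 2 S] by simp
    also have "\<dots> \<le> fc 2 T + 1" using le by simp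
    also have "\<dots> = fc t (tog T)" using fc_low[OF ft(2) z'(2) t] hi[of 2 T] T1 by simp
    finally show ?thesis .
  qed
  have B: "fc t T \<le> fc t (tog T)" for t
  proof (cases "2 \<le> t")
    case True then show ?thesis using hi by simp
  next
    case False
    then have t: "t \<le> 1" by simp
    show ?thesis using fc_low[OF fT z(2) t] fc_low[OF ft(2) z'(2) t] hi[of 2 T] T1 asc by simp
  qed
  show ?thesis using A B by blast
qed

lemma tau_inj: "inj (tau i)"
  unfolding inj_def tau_def by auto

lemma fc_tau_low: "t \<le> i \<Longrightarrow> fc t (tau i ` S) = fc t S"
proof -
  assume t: "t \<le> i"
  have "tau i ` S \<inter> {t..} = tau i ` (S \<inter> {t..})"
    using t by (auto simp: tau_def image_iff split: if_splits)
  then show ?thesis unfolding fc_def using card_image[OF inj_on_subset[OF tau_inj]] by simp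
qed

lemma fc_tau_high: "Suc (Suc i) \<le> t \<Longrightarrow> fc t (tau i ` S) = fc t S"
  by (rule fc_cong) (auto simp: tau_def image_iff)

lemma fc_tau_mid: "finite S \<Longrightarrow> fc (Suc i) (tau i ` S) = fc (Suc (Suc i)) S + (if i \<in> S then 1 else 0)"
proof -
  assume f: "finite S"
  have "fc (Suc i) (tau i ` S) = fc (Suc (Suc i)) (tau i ` S) + (if Suc i \<in> tau i ` S then 1 else 0)"
    using fc_split[of "tau i ` S" "Suc i"] f by simp
  moreover have "Suc i \<in> tau i ` S \<longleftrightarrow> i \<in> S" by (auto simp: tau_def image_iff)
  ultimately show ?thesis using fc_tau_high[of i "Suc (Suc i)" S] by simp
qed

lemma step_tau:
  assumes fS: "finite S" and fT: "finite T"
    and le: "\<forall>t. fc t S \<le> fc t T" and asc: "Suc i \<in> T \<longrightarrow> i \<in> T"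
  shows "(\<forall>t. fc t (tau i ` S) \<le> fc t (tau i ` T)) \<and> (\<forall>t. fc t T \<le> fc t (tau i ` T))"
proof -
  have eq: "fc t (tau i ` X) = fc t X" if "t \<noteq> Suc i" for t X
    using fc_tau_low[of t i X] fc_tau_high[of i t X] that by (cases "t \<le> i") auto
  have sp: "fc i X = fc (Suc (Suc i)) X + (if Suc i \<in> X then 1 else 0) + (if i \<in> X then 1 else 0)"
    if "finite X" for X
    using fc_split[OF that, of i] fc_split[OF that, of "Suc i"] by simp
  have A: "fc t (tau i ` S) \<le> fc t (tau i ` T)" for t
  proof (cases "t = Suc i")
    case False then show ?thesis using eq le by simp
  next
    case True
    have "fc (Suc (Suc i)) S + (if i \<in> S then 1 else 0) \<le> fc (Suc (Suc i)) T + (if i \<in> T then 1 else 0)"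
    proof (cases "i \<in> T")
      case True then show ?thesis using le by (auto intro: le_SucI)
    next
      case False
      then have "Suc i \<notin> T" using asc by blast
      then show ?thesis using le[rule_format, of i] le[rule_format, of "Suc (Suc i)"] sp[OF fS] sp[OF fT] False
        by (auto split: if_splits)
    qed
    then show ?thesis using True fc_tau_mid[OF fS] fc_tau_mid[OF fT] by simp
  qed
  have B: "fc t T \<le> fc t (tau i ` T)" for t
  proof (cases "t = Suc i")
    case False then show ?thesis using eq by simp
  next
    case True
    then show ?thesis using fc_tau_mid[OF fT] fc_split[OF fT, of "Suc i"] asc by auto
  qed
  show ?thesis using A B by blast
qed

lemma Nn_zero: "0 \<notin> Nn X"
  by (simp add: Nn_def)

lemma subword_mono:
  "a \<in> lists {..<n} \<Longrightarrow> Lw (Wn n a) = length a \<Longrightarrow> subseq b a \<Longrightarrow> \<forall>t. fc t (Nn (Wn n b)) \<le> fc t (Nn (Wn n a))"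
proof (induction a arbitrary: b)
  case Nil
  then have "b = []" by (cases b) auto
  then show ?case by simp
next
  case (Cons j a)
  have j: "j < n" and a: "a \<in> lists {..<n}" using Cons.prems by auto
  define X where "X = Wn n a"
  have vX: "valid n X" by (simp add: X_def valid_Wn)
  have WC: "Wn n (j # a) = map (sg j) X" using Wn_Cons[OF j] by (simp add: X_def)
  have "weq n (j # a) (j # Cw n X)" using weq_pre[OF weq_Cw[OF a], of "[j]"] j by (simp add: X_def)
  then have "Wn n (j # a) = Wn n (j # Cw n X)" by (rule weq_Wn)
  moreover have "Lw (Wn n (j # Cw n X)) \<le> length (j # Cw n X)"
    using Lw_Wn_le[of "j # Cw n X" n] j Cw_lists by simp
  ultimately have "Lw (Wn n (j # a)) \<le> Lw X + 1" using length_Cw[OF vX] by simp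
  moreover have "Lw X \<le> length a" using Lw_Wn_le[OF a] by (simp add: X_def)
  ultimately have red: "Lw X = length a" and up: "Lw (map (sg j) X) = Lw X + 1"
    using Cons.prems(2) WC by auto
  have IH: "\<forall>t. fc t (Nn (Wn n b')) \<le> fc t (Nn X)" if "subseq b' a" for b'
    using Cons.IH[OF a _ that] red by (simp add: X_def)
  have T0: "\<forall>t. fc t (Nn X) \<le> fc t (Nn X)" by simp
  have step: "(\<forall>t. fc t (Nn (map (sg j) Y)) \<le> fc t (Nn (map (sg j) X))) \<and> (\<forall>t. fc t (Nn X) \<le> fc t (Nn (map (sg j) X)))"
    if "valid n Y" "\<forall>t. fc t (Nn Y) \<le> fc t (Nn X)" for Y
  proof (cases j)
    case 0
    have n0: "0 < n" using j by simp
    have asc: "1 \<notin> Nn X" using Lw_sg_desc0[OF vX] up 0 by auto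
    have t1: "Nn (map (sg 0) Y) = tog (Nn Y)" "Nn (map (sg 0) X) = tog (Nn X)"
      using Nn_sg0[OF that(1) n0] Nn_sg0[OF vX n0] by (auto simp: tog_def)
    show ?thesis using step_tog[OF finite_Nn finite_Nn Nn_zero Nn_zero that(2) asc] t1 0 by simp
  next
    case (Suc k)
    then have i: "1 \<le> j" by simp
    have asc: "Suc j \<in> Nn X \<longrightarrow> j \<in> Nn X" using Lw_sg_desci[OF vX i] up by auto
    show ?thesis using step_tau[OF finite_Nn finite_Nn that(2) asc] Nn_sgi[OF i] by simp
  qed
  show ?case
  proof (cases b)
    case Nil
    then show ?thesis by (simp add: Wn_def Nn_idw fc_def)
  next
    case (Cons c b')
    show ?thesis
    proof (cases "c = j")
      case True
      then have sb: "subseq b' a" using Cons \<open>subseq b (j # a)\<close> by simp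
      have "Wn n b = map (sg j) (Wn n b')" using Wn_Cons[OF j] Cons True by simp
      then show ?thesis using step[OF valid_Wn IH[OF sb]] WC by simp
    next
      case False
      then have sb: "subseq b a" using Cons \<open>subseq b (j # a)\<close> by simp
      show ?thesis using IH[OF sb] step[OF vX T0] WC le_trans by metis
    qed
  qed
qed

section \<open>Bruhat order on the w_J\<close>

lemma length_wordJ: "finite J \<Longrightarrow> length (wordJ J) = \<Sum>J"
proof -
  assume f: "finite J"
  have "length (concat (map wword L)) = sum_list L" for L by (induction L) auto
  then show ?thesis unfolding wordJ_def using f
    by (simp add: sum_list_distinct_conv_sum_set[of "sorted_list_of_set J" id, simplified])
qed

lemma reduced_wordJ:
  assumes J: "J \<subseteq> {1..n}"
  shows "reduced_word n (elt n (wordJ J)) (wordJ J)"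
proof -
  have l: "wordJ J \<in> lists {..<n}" using wordJ_lists[OF J] .
  have f: "finite J" using J finite_subset by blast
  have "blen n (elt n (wordJ J)) = Lw (Wn n (wordJ J))" using blen_elt[OF l] .
  also have "\<dots> = \<Sum>J" using Wn_wordJ[OF J] by (simp add: Lw_def ninv_sorted)
  also have "\<dots> = length (wordJ J)" using length_wordJ[OF f] by simp
  finally show ?thesis unfolding reduced_word_def using l by (simp add: mem_elt weq_refl')
qed

lemma wword_suffix: "m \<le> m' \<Longrightarrow> suffix (wword m) (wword m')"
proof (induction m')
  case 0 then show ?case by simp
next
  case (Suc m')
  show ?case
  proof (cases "m = Suc m'")
    case True then show ?thesis by simp
  next
    case False
    then have "m \<le> m'" using Suc.prems by simp
    then have "suffix (wword m) (wword m')" using Suc.IH by simp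
    then show ?thesis
      by (cases "m' = 0") (auto simp: suffix_ConsI)
  qed
qed

lemma sorted_list_Max:
  assumes f: "finite J" and ne: "J \<noteq> {}"
  shows "sorted_list_of_set J = sorted_list_of_set (J - {Max J}) @ [Max J]"
proof -
  have f': "finite (J - {Max J})" using f by simp
  have "sorted_wrt (<) (sorted_list_of_set (J - {Max J}) @ [Max J])"
    using f f' ne by (auto simp: sorted_wrt_append less_le)
  moreover have "set (sorted_list_of_set (J - {Max J}) @ [Max J]) = J" using f Max_in[OF f ne] by (simp add: insert_absorb)
  ultimately show ?thesis
    using strict_sorted_equal[OF sorted_list_of_set.strict_sorted_key_list_of_set[of J]] f by simp
qed

lemma wordJ_Max: "finite J \<Longrightarrow> J \<noteq> {} \<Longrightarrow> wordJ J = wordJ (J - {Max J}) @ wword (Max J)"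
  unfolding wordJ_def by (simp add: sorted_list_Max)

lemma subseq_dom:
  "finite J \<Longrightarrow> finite K \<Longrightarrow> \<forall>t. fc t J \<le> fc t K \<Longrightarrow> subseq (wordJ J) (wordJ K)"
proof (induction "card J" arbitrary: J K)
  case 0
  then have "J = {}" by simp
  then show ?case by (simp add: wordJ_def)
next
  case (Suc c)
  note fJ = Suc.prems(1) and fK = Suc.prems(2) and le = Suc.prems(3)
  have ne: "J \<noteq> {}" using Suc.hyps(2) by auto
  define mJ where "mJ = Max J"
  have mJ: "mJ \<in> J" using Max_in[OF fJ ne] by (simp add: mJ_def)
  have allJ: "\<forall>x\<in>J. x \<le> mJ" using fJ by (simp add: mJ_def)
  have "fc mJ J \<ge> 1" unfolding fc_def using mJ fJ
    by (metis IntI Int_lower1 One_nat_def atLeast_iff card_0_eq empty_iff finite_subset le_refl less_one not_le)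
  then have "fc mJ K \<ge> 1" using le by (metis le_trans)
  then obtain y where y: "y \<in> K" "mJ \<le> y" unfolding fc_def by (metis Int_iff atLeast_iff card.empty disjoint_iff not_one_le_zero)
  then have neK: "K \<noteq> {}" by auto
  define mK where "mK = Max K"
  have mK: "mK \<in> K" using Max_in[OF fK neK] by (simp add: mK_def)
  have allK: "\<forall>x\<in>K. x \<le> mK" using fK by (simp add: mK_def)
  have mJK: "mJ \<le> mK" using y allK by force
  define J' where "J' = J - {mJ}"
  define K' where "K' = K - {mK}"
  have cJ': "card J' = c" using Suc.hyps(2) mJ fJ by (simp add: J'_def)
  have le': "\<forall>t. fc t J' \<le> fc t K'"
  proof
    fix t
    show "fc t J' \<le> fc t K'"
    proof (cases "t \<le> mJ")
      case True
      have a: "J' \<inter> {t..} = (J \<inter> {t..}) - {mJ}" by (auto simp: J'_def)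
      have b: "K' \<inter> {t..} = (K \<inter> {t..}) - {mK}" by (auto simp: K'_def)
      have "fc t J' = fc t J - 1" unfolding fc_def a using mJ True fJ by simp
      moreover have "fc t K' = fc t K - 1" unfolding fc_def b using mK True mJK fK by simp
      ultimately show ?thesis using le by (simp add: diff_le_mono)
    next
      case False
      then have "J' \<inter> {t..} = {}" using allJ by (auto simp: J'_def)
      then show ?thesis by (simp add: fc_def)
    qed
  qed
  have s1: "subseq (wordJ J') (wordJ K')"
    using Suc.hyps(1)[OF cJ'[symmetric] _ _ le'] fJ fK by (simp add: J'_def K'_def)
  have s2: "subseq (wword mJ) (wword mK)" using wword_suffix[OF mJK] by (rule suffix_imp_subseq)
  show ?case using list_emb_append_mono[OF s1 s2] wordJ_Max[OF fJ ne] wordJ_Max[OF fK neK]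
    by (simp add: J'_def K'_def mJ_def mK_def)
qed

lemma bruhat_wI:
  assumes J: "J \<subseteq> {1..n}" and K: "K \<subseteq> {1..n}"
  shows "bruhat n (wI n J) (wI n K) \<longleftrightarrow> (\<forall>t. fc t J \<le> fc t K)"
proof
  assume "bruhat n (wI n J) (wI n K)"
  then obtain a b where a: "reduced_word n (elt n (wordJ K)) a" and sb: "subseq b a"
    and b: "reduced_word n (elt n (wordJ J)) b"
    unfolding bruhat_def wI_wordJ by blast
  have wa: "weq n (wordJ K) a" and la: "length a = blen n (elt n (wordJ K))"
    using a by (auto simp: reduced_word_def mem_elt)
  have wb: "weq n (wordJ J) b" using b by (auto simp: reduced_word_def mem_elt)
  have al: "a \<in> lists {..<n}" and Wa: "Wn n a = Wn n (wordJ K)" using wa faithful by auto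
  have Wb: "Wn n b = Wn n (wordJ J)" using wb faithful by auto
  have "blen n (elt n (wordJ K)) = Lw (Wn n (wordJ K))" using blen_elt[OF wordJ_lists[OF K]] .
  then have "Lw (Wn n a) = length a" using la Wa by simp
  from subword_mono[OF al this sb] show "\<forall>t. fc t J \<le> fc t K"
    using Wa Wb Wn_wordJ[OF J] Wn_wordJ[OF K] by simp
next
  assume "\<forall>t. fc t J \<le> fc t K"
  moreover have "finite J" "finite K" using J K finite_subset by auto
  ultimately have "subseq (wordJ J) (wordJ K)" using subseq_dom by blast
  then show "bruhat n (wI n J) (wI n K)"
    unfolding bruhat_def wI_wordJ using reduced_wordJ[OF J] reduced_wordJ[OF K] by blast
qed

section \<open>Minimal coset representatives\<close>

lemma BnQ_eq: "BnQ n = wI n ` Pow {1..n}"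
proof (rule set_eqI)
  fix x
  show "x \<in> BnQ n \<longleftrightarrow> x \<in> wI n ` Pow {1..n}"
  proof
    assume x: "x \<in> BnQ n"
    then obtain u where u: "u \<in> lists {..<n}" "x = elt n u" by (auto simp: BnQ_def Bgrp_def)
    define X where "X = Wn n u"
    have v: "valid n X" by (simp add: X_def valid_Wn)
    have nd: "\<not> dsc X i" if "1 \<le> i" "i < n" for i
    proof
      assume d: "dsc X i"
      have il: "[i] \<in> lists {..<n}" using that by simp
      have "blen n x < blen n (bmult n x (elt n [i]))" using x that by (auto simp: BnQ_def)
      then have "Lw X < Lw (opw i X)"
        using bmult_elt[OF u(1) il] blen_elt[OF u(1)] blen_elt[of "u @ [i]" n] u il
        by (simp add: X_def Wn_snoc)
      then show False using Lw_opw_dsc[OF v that(2) d] by simp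
    qed
    have s: "sorted_wrt (<) X" using nodsc_sorted[OF v nd] by blast
    define J where "J = Nn X"
    have J: "J \<subseteq> {1..n}" using Nn_sub[OF v] by (simp add: J_def)
    have "X = Wn n (wordJ J)"
      using valid_unique[OF v valid_Wn s] Wn_wordJ[OF J] by (simp add: J_def)
    then have "weq n u (wordJ J)" using faithful u wordJ_lists[OF J] by (simp add: X_def)
    then have "x = wI n J" using u elt_eq by (simp add: wI_wordJ)
    then show "x \<in> wI n ` Pow {1..n}" using J by blast
  next
    assume "x \<in> wI n ` Pow {1..n}"
    then obtain J where J: "J \<subseteq> {1..n}" and x: "x = elt n (wordJ J)" by (auto simp: wI_wordJ)
    have l: "wordJ J \<in> lists {..<n}" using wordJ_lists[OF J] .
    define X where "X = Wn n (wordJ J)"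
    have v: "valid n X" by (simp add: X_def valid_Wn)
    have s: "sorted_wrt (<) X" using Wn_wordJ[OF J] by (simp add: X_def)
    have "blen n x < blen n (bmult n x (elt n [i]))" if "i \<in> {1..n - 1}" for i
    proof -
      have i: "1 \<le> i" "i < n" using that by auto
      have il: "[i] \<in> lists {..<n}" using i by simp
      have "\<not> dsc X i" using sorted_nodsc[OF s i(1)] v i by (simp add: valid_def)
      then have "Lw (opw i X) = Lw X + 1" using Lw_opw_asc[OF v i(2)] by simp
      then show ?thesis using bmult_elt[OF l il] blen_elt[OF l] blen_elt[of "wordJ J @ [i]" n] l il x
        by (simp add: X_def Wn_snoc)
    qed
    moreover have "x \<in> Bgrp n" using l x by (simp add: Bgrp_def)
    ultimately show "x \<in> BnQ n" by (simp add: BnQ_def)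
  qed
qed

lemma wI_inj: "inj_on (wI n) (Pow {1..n})"
proof (rule inj_onI)
  fix J K assume J: "J \<in> Pow {1..n}" and K: "K \<in> Pow {1..n}" and e: "wI n J = wI n K"
  have "wordJ K \<in> elt n (wordJ J)" using e wordJ_lists[of K n] K by (simp add: wI_wordJ mem_elt weq_refl')
  then have "Wn n (wordJ J) = Wn n (wordJ K)" using faithful by (simp add: mem_elt)
  moreover have "Nn (Wn n (wordJ J)) = J" using Wn_wordJ[of J n] J by blast
  moreover have "Nn (Wn n (wordJ K)) = K" using Wn_wordJ[of K n] K by blast
  ultimately show "J = K" by metis
qed

lemma gmap_img: "gmap n I = (\<lambda>j. n - j + 1) ` ({1..n} - I)"
  by (auto simp: gmap_def)

lemma gmap_sub: "gmap n I \<subseteq> {1..n}"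
  by (auto simp: gmap_def)

lemma gmap_gmap: "I \<subseteq> {1..n} \<Longrightarrow> gmap n (gmap n I) = I"
  unfolding gmap_def
proof (rule set_eqI)
  fix x assume I: "I \<subseteq> {1..n}"
  show "x \<in> {n - j + 1 |j. j \<in> {1..n} - {n - j + 1 |j. j \<in> {1..n} - I}} \<longleftrightarrow> x \<in> I"
  proof
    assume "x \<in> {n - j + 1 |j. j \<in> {1..n} - {n - j + 1 |j. j \<in> {1..n} - I}}"
    then obtain j where j: "x = n - j + 1" "1 \<le> j" "j \<le> n" "\<forall>k. k \<in> {1..n} - I \<longrightarrow> j \<noteq> n - k + 1" by auto
    have "x \<in> {1..n}" using j by auto
    moreover have "j = n - x + 1" using j by auto
    ultimately show "x \<in> I" using j(4) by auto
  next
    assume x: "x \<in> I"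
    then have x1: "1 \<le> x" "x \<le> n" using I by auto
    show "x \<in> {n - j + 1 |j. j \<in> {1..n} - {n - j + 1 |j. j \<in> {1..n} - I}}"
    proof -
      have "n - x + 1 \<in> {1..n} - {n - j + 1 |j. j \<in> {1..n} - I}"
      proof -
        have "n - x + 1 \<noteq> n - k + 1" if "k \<in> {1..n} - I" for k
          using that x x1 by (metis DiffE atLeastAtMost_iff diff_diff_cancel add_right_cancel)
        then show ?thesis using x1 by auto
      qed
      moreover have "x = n - (n - x + 1) + 1" using x1 by auto
      ultimately show ?thesis by blast
    qed
  qed
qed

lemma gmap_bij: "bij_betw (gmap n) (Pow {1..n}) (Pow {1..n})"
proof (rule bij_betw_byWitness[where f' = "gmap n"])
  show "\<forall>a\<in>Pow {1..n}. gmap n (gmap n a) = a" using gmap_gmap by blast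
  show "\<forall>a'\<in>Pow {1..n}. gmap n (gmap n a') = a'" using gmap_gmap by blast
  show "gmap n ` Pow {1..n} \<subseteq> Pow {1..n}" using gmap_sub by blast
  show "gmap n ` Pow {1..n} \<subseteq> Pow {1..n}" using gmap_sub by blast
qed

lemma alpha_bij: "bij_betw (alpha n) (Pow {1..n}) (BnQ n)"
proof -
  have "alpha n = wI n \<circ> gmap n" by (simp add: alpha_def fun_eq_iff)
  moreover have "bij_betw (wI n) (Pow {1..n}) (BnQ n)"
    unfolding BnQ_eq using wI_inj by (simp add: bij_betw_def)
  ultimately show ?thesis using bij_betw_trans[OF gmap_bij] by metis
qed

section \<open>Combinatorics of the tableau order\<close>

lemma ext_tab: "finite B \<Longrightarrow> ext_le A B \<longleftrightarrow> tab_le A B"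
  unfolding ext_le_def tab_le_def by auto

lemma kth_key:
  assumes f: "finite A" and k: "1 \<le> k"
  shows "k \<le> card (A \<inter> {..t}) \<longleftrightarrow> k \<le> card A \<and> kth A k \<le> t"
proof -
  define xs where "xs = sorted_list_of_set A"
  have s: "sorted_wrt (<) xs" unfolding xs_def by (rule sorted_list_of_set.strict_sorted_key_list_of_set)
  have d: "distinct xs" and st: "set xs = A" and len: "length xs = card A" using f by (auto simp: xs_def)
  have kt: "kth A k = xs ! (k - 1)" by (simp add: kth_def xs_def)
  have mono: "xs ! p \<le> xs ! q" if "p \<le> q" "q < length xs" for p q
    using sorted_wrt_nth_less[OF s, of p q] that by (cases "p = q") auto
  have fi: "finite (A \<inter> {..t})" using f by simp
  show ?thesis
  proof
    assume a: "k \<le> card (A \<inter> {..t})"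
    have ca: "k \<le> card A" using a card_mono[OF f, of "A \<inter> {..t}"] by auto
    moreover have "xs ! (k - 1) \<le> t"
    proof (rule ccontr)
      assume "\<not> xs ! (k - 1) \<le> t"
      then have gt: "t < xs ! (k - 1)" by simp
      have "A \<inter> {..t} \<subseteq> set (take (k - 1) xs)"
      proof
        fix y assume y: "y \<in> A \<inter> {..t}"
        then obtain p where p: "p < length xs" "xs ! p = y" using st by (auto simp: in_set_conv_nth)
        have "p < k - 1"
        proof (rule ccontr)
          assume "\<not> p < k - 1"
          then have "xs ! (k - 1) \<le> xs ! p" using mono[of "k - 1" p] p(1) by simp
          then show False using gt y p by auto
        qed
        then show "y \<in> set (take (k - 1) xs)" using p by (auto simp: in_set_conv_nth)
      qed
      then have "card (A \<inter> {..t}) \<le> card (set (take (k - 1) xs))" by (rule card_mono[rotated]) simp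
      also have "\<dots> \<le> k - 1" using card_length[of "take (k - 1) xs"] by simp
      finally show False using a k by simp
    qed
    ultimately show "k \<le> card A \<and> kth A k \<le> t" using kt by simp
  next
    assume a: "k \<le> card A \<and> kth A k \<le> t"
    have "set (take k xs) \<subseteq> A \<inter> {..t}"
    proof
      fix y assume "y \<in> set (take k xs)"
      then obtain p where p: "p < k" "p < length xs" "y = xs ! p" by (auto simp: in_set_conv_nth)
      have pk: "p \<le> k - 1" "k - 1 < length xs" using p a len assms(2) by auto
      have "xs ! p \<le> xs ! (k - 1)" using mono[OF pk] .
      then show "y \<in> A \<inter> {..t}" using p a kt st by auto
    qed
    then have "card (set (take k xs)) \<le> card (A \<inter> {..t})" by (rule card_mono[OF fi])
    moreover have "card (set (take k xs)) = k" using d a len by (simp add: distinct_card)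
    ultimately show "k \<le> card (A \<inter> {..t})" by simp
  qed
qed

lemma tab_count:
  assumes fA: "finite A" and fB: "finite B"
  shows "tab_le A B \<longleftrightarrow> (\<forall>t. card (B \<inter> {..t}) \<le> card (A \<inter> {..t}))"
proof
  assume tab: "tab_le A B"
  show "\<forall>t. card (B \<inter> {..t}) \<le> card (A \<inter> {..t})"
  proof
    fix t
    define k where "k = card (B \<inter> {..t})"
    show "card (B \<inter> {..t}) \<le> card (A \<inter> {..t})"
    proof (cases "k = 0")
      case True then show ?thesis by (simp add: k_def)
    next
      case False
      then have k1: "1 \<le> k" by simp
      have "k \<le> card B \<and> kth B k \<le> t" using kth_key[OF fB k1, of t] by (simp add: k_def)
      moreover have "card B \<le> card A" "kth A k \<le> kth B k" using tab k1 calculation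
        by (auto simp: tab_le_def)
      ultimately have "k \<le> card A \<and> kth A k \<le> t" by simp
      then show ?thesis using kth_key[OF fA k1] by (simp add: k_def)
    qed
  qed
next
  assume c: "\<forall>t. card (B \<inter> {..t}) \<le> card (A \<inter> {..t})"
  define t0 where "t0 = Max (insert 0 (A \<union> B))"
  have "\<forall>x\<in>A \<union> B. x \<le> t0" using fA fB by (simp add: t0_def)
  then have "B \<inter> {..t0} = B" "A \<inter> {..t0} = A" by auto
  then have cAB: "card B \<le> card A" using c[rule_format, of t0] by simp
  have "kth A k \<le> kth B k" if k: "k \<in> {1..card B}" for k
  proof -
    have k1: "1 \<le> k" using k by simp
    have "k \<le> card (B \<inter> {..kth B k})" using kth_key[OF fB k1] k by simp
    then have "k \<le> card (A \<inter> {..kth B k})" using c le_trans by blast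
    then show ?thesis using kth_key[OF fA k1] by simp
  qed
  then show "tab_le A B" using cAB by (simp add: tab_le_def)
qed

lemma fc_gmap:
  assumes A: "A \<subseteq> {1..n}"
  shows "fc s (gmap n A) = card ({1..n} \<inter> {..n + 1 - s}) - card (A \<inter> {..n + 1 - s})"
proof -
  define r where "r = (\<lambda>j::nat. n - j + 1)"
  have ir: "inj_on r {1..n}" unfolding r_def inj_on_def by auto
  have e: "gmap n A \<inter> {s..} = r ` (({1..n} - A) \<inter> {..n + 1 - s})"
  proof
    show "gmap n A \<inter> {s..} \<subseteq> r ` (({1..n} - A) \<inter> {..n + 1 - s})"
    proof
      fix x assume "x \<in> gmap n A \<inter> {s..}"
      then obtain j where j: "j \<in> {1..n} - A" "x = r j" "s \<le> x" unfolding gmap_img r_def by auto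
      then have "j \<le> n + 1 - s" unfolding r_def by auto
      then show "x \<in> r ` (({1..n} - A) \<inter> {..n + 1 - s})" using j by auto
    qed
    show "r ` (({1..n} - A) \<inter> {..n + 1 - s}) \<subseteq> gmap n A \<inter> {s..}"
      unfolding gmap_img r_def by auto
  qed
  have "card (gmap n A \<inter> {s..}) = card (({1..n} - A) \<inter> {..n + 1 - s})"
    unfolding e by (rule card_image) (rule inj_on_subset[OF ir], auto)
  also have "({1..n} - A) \<inter> {..n + 1 - s} = ({1..n} \<inter> {..n + 1 - s}) - (A \<inter> {..n + 1 - s})" by auto
  also have "card \<dots> = card ({1..n} \<inter> {..n + 1 - s}) - card (A \<inter> {..n + 1 - s})"
    by (rule card_Diff_subset) (use A in auto)
  finally show ?thesis by (simp add: fc_def)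
qed

lemma count_gmap:
  assumes A: "A \<subseteq> {1..n}" and B: "B \<subseteq> {1..n}"
  shows "(\<forall>t. card (B \<inter> {..t}) \<le> card (A \<inter> {..t})) \<longleftrightarrow> (\<forall>s. fc s (gmap n A) \<le> fc s (gmap n B))"
proof
  assume c: "\<forall>t. card (B \<inter> {..t}) \<le> card (A \<inter> {..t})"
  show "\<forall>s. fc s (gmap n A) \<le> fc s (gmap n B)"
    using c fc_gmap[OF A] fc_gmap[OF B] by (simp add: diff_le_mono2)
next
  assume c: "\<forall>s. fc s (gmap n A) \<le> fc s (gmap n B)"
  show "\<forall>t. card (B \<inter> {..t}) \<le> card (A \<inter> {..t})"
  proof
    fix t
    define u where "u = min t n"
    have eA: "A \<inter> {..t} = A \<inter> {..u}" using A by (auto simp: u_def)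
    have eB: "B \<inter> {..t} = B \<inter> {..u}" using B by (auto simp: u_def)
    have un: "n + 1 - (n + 1 - u) = u" by (simp add: u_def)
    define M where "M = card ({1..n} \<inter> {..u})"
    have mA: "card (A \<inter> {..u}) \<le> M" unfolding M_def by (rule card_mono) (use A in auto)
    have mB: "card (B \<inter> {..u}) \<le> M" unfolding M_def by (rule card_mono) (use B in auto)
    have "M - card (A \<inter> {..u}) \<le> M - card (B \<inter> {..u})"
      using c[rule_format, of "n + 1 - u"] fc_gmap[OF A] fc_gmap[OF B] un by (simp add: M_def)
    then have "card (B \<inter> {..u}) \<le> card (A \<inter> {..u})" using mA mB by linarith
    then show "card (B \<inter> {..t}) \<le> card (A \<inter> {..t})" using eA eB by simp
  qed
qed

theorem mainTheorem13:
  fixes n :: nat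
  shows "BnQ n = wI n ` Pow {1..n}
    \<and> bij_betw (alpha n) (Pow {1..n}) (BnQ n)
    \<and> (\<forall>A\<in>Pow {1..n}. \<forall>B\<in>Pow {1..n}. ext_le A B \<longleftrightarrow> bruhat n (alpha n A) (alpha n B))"
proof (intro conjI ballI)
  show "BnQ n = wI n ` Pow {1..n}" by (rule BnQ_eq)
  show "bij_betw (alpha n) (Pow {1..n}) (BnQ n)" by (rule alpha_bij)
  fix A B assume A: "A \<in> Pow {1..n}" and B: "B \<in> Pow {1..n}"
  have A': "A \<subseteq> {1..n}" and B': "B \<subseteq> {1..n}" using A B by auto
  have fA: "finite A" and fB: "finite B" using A' B' finite_subset by auto
  have "ext_le A B \<longleftrightarrow> tab_le A B" using ext_tab[OF fB] .
  also have "\<dots> \<longleftrightarrow> (\<forall>t. card (B \<inter> {..t}) \<le> card (A \<inter> {..t}))" using tab_count[OF fA fB] .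
  also have "\<dots> \<longleftrightarrow> (\<forall>s. fc s (gmap n A) \<le> fc s (gmap n B))" using count_gmap[OF A' B'] .
  also have "\<dots> \<longleftrightarrow> bruhat n (wI n (gmap n A)) (wI n (gmap n B))"
    using bruhat_wI[OF gmap_sub gmap_sub] by simp
  also have "\<dots> \<longleftrightarrow> bruhat n (alpha n A) (alpha n B)" by (simp add: alpha_def)
  finally show "ext_le A B \<longleftrightarrow> bruhat n (alpha n A) (alpha n B)" .
qed

end
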